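(* Fix $k,d\in\mathbb{N}=\{1,2,\dots\}$. Let $G$ be a graph with $\operatorname{tw}(G)\leq k-1$ and $\Delta(G)\leq d$. Then $G$ has a tree-partition $(B_x : x\in V(T))$ of width at most $18kd$ such that $\Delta(T)\leq 6d$. Moreover, for any set $S\subseteq V(G)$ with $4k\leq |S|\leq 12kd$, there exists a tree-partition $(B_x:x\in V(T))$ of $G$ of width at most $18kd$ such that $\Delta(T)\leq 6d$ and there exists a node $z\in V(T)$ such that: $S\subseteq B_z$; $|B_z|\leq \tfrac32|S|-2k$; and $\deg_T(z)\leq \tfrac{|S|}{2k}-1$.
   Context: All graphs are finite and simple. $\Delta(G)$ denotes the maximum degree of $G$, and $\operatorname{tw}(G)$ its treewidth. For a graph $G$ and a tree $T$, a $T$-partition of $G$ is a family $(B_x : x\in V(T))$ of pairwise disjoint subsets of $V(G)$ (some possibly empty) with union $V(G)$, indexed by the nodes of $T$, such that for every edge $vw$ of $G$, if $v\in B_x$ and $w\in B_y$ then $x=y$ or $xy\in E(T)$. A tree-partition of $G$ is a $T$-partition for some tree $T$. The width of a $T$-partition is $\max\{|B_x| : x\in V(T)\}$. *)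

theory Defs
  imports Complex_Main
begin

definition graph :: "'a set \<Rightarrow> 'a set set \<Rightarrow> bool" where
  "graph V E \<longleftrightarrow> finite V \<and> (\<forall>e\<in>E. \<exists>u v. e = {u, v} \<and> u \<noteq> v \<and> u \<in> V \<and> v \<in> V)"

definition degree :: "'a set set \<Rightarrow> 'a \<Rightarrow> nat" where
  "degree E v = card {u. {u, v} \<in> E}"

definition max_degree_le :: "'a set \<Rightarrow> 'a set set \<Rightarrow> nat \<Rightarrow> bool" where
  "max_degree_le V E d \<longleftrightarrow> (\<forall>v\<in>V. degree E v \<le> d)"

definition walk :: "'a set set \<Rightarrow> 'a list \<Rightarrow> bool" where
  "walk E xs \<longleftrightarrow> xs \<noteq> [] \<and> (\<forall>i. Suc i < length xs \<longrightarrow> {xs ! i, xs ! Suc i} \<in> E)"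

definition connected_set :: "'a set set \<Rightarrow> 'a set \<Rightarrow> bool" where
  "connected_set E X \<longleftrightarrow>
     (\<forall>u\<in>X. \<forall>v\<in>X. \<exists>xs. walk E xs \<and> set xs \<subseteq> X \<and> hd xs = u \<and> last xs = v)"

definition is_cycle :: "'a set set \<Rightarrow> 'a list \<Rightarrow> bool" where
  "is_cycle E xs \<longleftrightarrow> length xs \<ge> 3 \<and> distinct xs \<and> walk E xs \<and> {last xs, hd xs} \<in> E"

definition tree :: "'b set \<Rightarrow> 'b set set \<Rightarrow> bool" where
  "tree VT ET \<longleftrightarrow> graph VT ET \<and> VT \<noteq> {} \<and> connected_set ET VT \<and> (\<nexists>xs. is_cycle ET xs)"

definition tree_decomposition ::
  "'a set \<Rightarrow> 'a set set \<Rightarrow> 'b set \<Rightarrow> 'b set set \<Rightarrow> ('b \<Rightarrow> 'a set) \<Rightarrow> bool" where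
  "tree_decomposition V E VT ET W \<longleftrightarrow>
     tree VT ET \<and> (\<forall>x\<in>VT. W x \<subseteq> V) \<and>
     (\<forall>v\<in>V. \<exists>x\<in>VT. v \<in> W x) \<and>
     (\<forall>e\<in>E. \<exists>x\<in>VT. e \<subseteq> W x) \<and>
     (\<forall>v\<in>V. connected_set ET {x\<in>VT. v \<in> W x})"

text \<open>tw(G) \<le> w: there is a tree decomposition all of whose bags have size at most w+1.
  Tree nodes are taken to be natural numbers (every finite tree is isomorphic to one on nat).\<close>
definition treewidth_le :: "'a set \<Rightarrow> 'a set set \<Rightarrow> nat \<Rightarrow> bool" where
  "treewidth_le V E w \<longleftrightarrow>
     (\<exists>(VT::nat set) ET W. tree_decomposition V E VT ET W \<and> (\<forall>x\<in>VT. card (W x) \<le> w + 1))"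

definition T_partition ::
  "'a set \<Rightarrow> 'a set set \<Rightarrow> 'b set \<Rightarrow> 'b set set \<Rightarrow> ('b \<Rightarrow> 'a set) \<Rightarrow> bool" where
  "T_partition V E VT ET B \<longleftrightarrow>
     tree VT ET \<and>
     (\<forall>x\<in>VT. \<forall>y\<in>VT. x \<noteq> y \<longrightarrow> B x \<inter> B y = {}) \<and>
     (\<Union>x\<in>VT. B x) = V \<and>
     (\<forall>v w x y. {v, w} \<in> E \<longrightarrow> x \<in> VT \<longrightarrow> y \<in> VT \<longrightarrow> v \<in> B x \<longrightarrow> w \<in> B y \<longrightarrow>
        x = y \<or> {x, y} \<in> ET)"

definition width_le :: "'b set \<Rightarrow> ('b \<Rightarrow> 'a set) \<Rightarrow> nat \<Rightarrow> bool" where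
  "width_le VT B w \<longleftrightarrow> (\<forall>x\<in>VT. card (B x) \<le> w)"

end

theory Submission
  imports Defs
begin

fun steps :: "'b list \<Rightarrow> 'b set set" where
  "steps (a # b # xs) = insert {a,b} (steps (b # xs))"
| "steps _ = {}"

lemma walk_Cons2: "walk E (a # b # xs) \<longleftrightarrow> {a,b} \<in> E \<and> walk E (b # xs)"
proof
  assume h: "walk E (a # b # xs)"
  have "\<forall>i. Suc i < length (a # b # xs) \<longrightarrow> {(a # b # xs) ! i, (a # b # xs) ! Suc i} \<in> E"
    using h unfolding walk_def by blast
  note hh = this[rule_format]
  have "{a,b} \<in> E" using hh[of 0] by simp
  moreover have "walk E (b # xs)" unfolding walk_def
  proof (intro conjI allI impI)
    fix i assume "Suc i < length (b # xs)"
    then show "{(b # xs) ! i, (b # xs) ! Suc i} \<in> E" using hh[of "Suc i"] by simp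
  qed simp
  ultimately show "{a,b} \<in> E \<and> walk E (b # xs)" by blast
next
  assume h: "{a,b} \<in> E \<and> walk E (b # xs)"
  show "walk E (a # b # xs)" unfolding walk_def
  proof (intro conjI allI impI)
    fix i assume i: "Suc i < length (a # b # xs)"
    show "{(a # b # xs) ! i, (a # b # xs) ! Suc i} \<in> E"
    proof (cases i)
      case 0 then show ?thesis using h by simp
    next
      case (Suc j) then show ?thesis using h i unfolding walk_def by auto
    qed
  qed simp
qed

lemma walk_single[simp]: "walk E [a]"
  unfolding walk_def by simp

lemma walk_steps: "walk E xs \<longleftrightarrow> xs \<noteq> [] \<and> steps xs \<subseteq> E"
proof (induction xs rule: steps.induct)
  case (1 a b xs) then show ?case by (simp add: walk_Cons2)
next
  case "2_1" then show ?case by (simp add: walk_def)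
next
  case ("2_2" v) then show ?case by simp
qed

lemma steps_append: "xs \<noteq> [] \<Longrightarrow> ys \<noteq> [] \<Longrightarrow> steps (xs @ ys) = steps xs \<union> steps ys \<union> {{last xs, hd ys}}"
proof (induction xs rule: steps.induct)
  case (1 a b xs) then show ?case by auto
next
  case "2_1" then show ?case by simp
next
  case ("2_2" v) then show ?case by (cases ys) auto
qed

lemma steps_rev: "steps (rev xs) = steps xs"
proof (induction xs rule: steps.induct)
  case (1 a b xs)
  have "steps (rev (a # b # xs)) = steps (rev (b # xs) @ [a])" by simp
  also have "\<dots> = steps (rev (b#xs)) \<union> {{b, a}}" by (subst steps_append) (auto simp: last_rev)
  finally show ?case using 1 by (auto simp: insert_commute)
qed auto

lemma steps_sub: "e \<in> steps xs \<Longrightarrow> e \<subseteq> set xs"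
  by (induction xs rule: steps.induct) auto

lemma steps_card: "e \<in> steps xs \<Longrightarrow> \<exists>a b. e = {a,b}"
  by (induction xs rule: steps.induct) auto

lemma steps_Cons_ne: "xs \<noteq> [] \<Longrightarrow> steps (a # xs) = insert {a, hd xs} (steps xs)"
  by (cases xs) auto

definition reach :: "'b set set \<Rightarrow> 'b set \<Rightarrow> 'b \<Rightarrow> 'b \<Rightarrow> bool" where
  "reach E U a b \<longleftrightarrow> (\<exists>xs. walk E xs \<and> set xs \<subseteq> U \<and> hd xs = a \<and> last xs = b)"

lemma connected_set_reach: "connected_set E X \<longleftrightarrow> (\<forall>u\<in>X. \<forall>v\<in>X. reach E X u v)"
  unfolding connected_set_def reach_def by simp

lemma reach_refl: "a \<in> U \<Longrightarrow> reach E U a a"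
  unfolding reach_def by (rule exI[of _ "[a]"]) simp

lemma reach_edge: "{a,b} \<in> E \<Longrightarrow> a \<in> U \<Longrightarrow> b \<in> U \<Longrightarrow> reach E U a b"
  unfolding reach_def by (rule exI[of _ "[a,b]"]) (simp add: walk_Cons2)

lemma reach_in: "reach E U a b \<Longrightarrow> a \<in> U \<and> b \<in> U"
  unfolding reach_def walk_def by (metis hd_in_set last_in_set subsetD)

lemma reach_trans: assumes "reach E U a b" "reach E U b c" shows "reach E U a c"
proof -
  obtain xs where xs: "walk E xs" "set xs \<subseteq> U" "hd xs = a" "last xs = b" using assms(1) unfolding reach_def by blast
  obtain ys where ys: "walk E ys" "set ys \<subseteq> U" "hd ys = b" "last ys = c" using assms(2) unfolding reach_def by blast
  obtain ys' where ys': "ys = b # ys'" using ys by (cases ys) (auto simp: walk_def)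
  show ?thesis
  proof (cases "ys' = []")
    case True then show ?thesis using xs ys ys' unfolding reach_def by auto
  next
    case False
    have "walk E (xs @ ys')" using xs ys ys' False
      by (auto simp: walk_steps steps_append steps_Cons_ne)
    then show ?thesis using xs ys ys' False unfolding reach_def
      by (intro exI[of _ "xs @ ys'"]) (auto simp: walk_def)
  qed
qed

lemma reach_sym: assumes "reach E U a b" shows "reach E U b a"
proof -
  obtain xs where xs: "walk E xs" "set xs \<subseteq> U" "hd xs = a" "last xs = b" using assms(1) unfolding reach_def by blast
  show ?thesis unfolding reach_def
    by (rule exI[of _ "rev xs"]) (use xs in \<open>auto simp: walk_steps steps_rev hd_rev last_rev\<close>)
qed

lemma reach_mono: "reach E U a b \<Longrightarrow> E \<subseteq> E' \<Longrightarrow> U \<subseteq> U' \<Longrightarrow> reach E' U' a b"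
  unfolding reach_def walk_steps by blast

lemma reach_pow: "reach E U a b \<Longrightarrow> reach (E \<inter> Pow U) U a b"
  unfolding reach_def walk_steps using steps_sub by blast

lemma reach_mid: "walk E xs \<Longrightarrow> set xs \<subseteq> U \<Longrightarrow> c \<in> set xs \<Longrightarrow> reach E U (hd xs) c"
proof -
  assume a: "walk E xs" "set xs \<subseteq> U" "c \<in> set xs"
  obtain p q where pq: "xs = p @ c # q" using a(3) split_list by metis
  have "walk E (p @ [c])"
  proof (cases "p = []")
    case True then show ?thesis by simp
  next
    case False
    then show ?thesis using a(1) pq by (cases q) (auto simp: walk_steps steps_append steps_Cons_ne)
  qed
  then show ?thesis unfolding reach_def using a pq by (intro exI[of _ "p @ [c]"]) (cases p, auto)
qed

lemma last_exit:
  assumes "reach E U x t" "t \<noteq> x"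
  shows "\<exists>y. {x,y} \<in> E \<and> reach E (U - {x}) y t"
proof -
  obtain xs where xs: "walk E xs" "set xs \<subseteq> U" "hd xs = x" "last xs = t" using assms(1) unfolding reach_def by blast
  have "x \<in> set xs" using xs by (cases xs) (auto simp: walk_def)
  then obtain p q where pq: "xs = p @ x # q" "x \<notin> set q" using split_list_last by metis
  have qne: "q \<noteq> []" using pq xs assms(2) by auto
  have st: "steps (x # q) \<subseteq> E"
  proof (cases "p = []")
    case True then show ?thesis using xs pq by (simp add: walk_steps)
  next
    case False then show ?thesis using xs pq by (auto simp: walk_steps steps_append)
  qed
  have "{x, hd q} \<in> E" using st qne by (auto simp: steps_Cons_ne)
  moreover have "reach E (U - {x}) (hd q) t" unfolding reach_def
    using st qne pq xs by (intro exI[of _ q]) (auto simp: walk_steps steps_Cons_ne)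
  ultimately show ?thesis by blast
qed

lemma walk_distinct:
  "walk E xs \<Longrightarrow> \<exists>ys. walk E ys \<and> distinct ys \<and> set ys \<subseteq> set xs \<and> hd ys = hd xs \<and> last ys = last xs"
proof (induction "length xs" arbitrary: xs rule: less_induct)
  case less
  show ?case
  proof (cases "distinct xs")
    case True then show ?thesis using less.prems by blast
  next
    case False
    then obtain as v bs cs where dec: "xs = as @ [v] @ bs @ [v] @ cs" using not_distinct_decomp by blast
    define xs' where "xs' = as @ [v] @ cs"
    have st: "steps xs' \<subseteq> steps xs"
    proof -
      have s1: "steps (as @ [v]) \<subseteq> steps xs"
      proof -
        have eq: "xs = (as @ [v]) @ (bs @ [v] @ cs)" using dec by simp
        have H: "steps ((as @ [v]) @ (bs @ [v] @ cs)) = steps (as @ [v]) \<union> steps (bs @ [v] @ cs) \<union> {{last (as @ [v]), hd (bs @ [v] @ cs)}}"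
          by (rule steps_append) auto
        show ?thesis by (simp only: eq H) blast
      qed
      have s2: "steps (v # cs) \<subseteq> steps xs"
      proof -
        have eq: "xs = (as @ [v] @ bs) @ (v # cs)" using dec by simp
        have H: "steps ((as @ [v] @ bs) @ (v # cs)) = steps (as @ [v] @ bs) \<union> steps (v # cs) \<union> {{last (as @ [v] @ bs), hd (v # cs)}}"
          by (rule steps_append) auto
        show ?thesis by (simp only: eq H) blast
      qed
      show ?thesis
      proof (cases "cs = []")
        case True then show ?thesis using s1 by (simp add: xs'_def)
      next
        case False
        have "steps xs' = steps (as @ [v]) \<union> steps cs \<union> {{v, hd cs}}"
          unfolding xs'_def using False steps_append[of "as @ [v]" cs] by simp
        moreover have "steps (v # cs) = insert {v, hd cs} (steps cs)" using False by (simp add: steps_Cons_ne)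
        ultimately show ?thesis using s1 s2 by auto
      qed
    qed
    have w: "walk E xs'" using st less.prems unfolding walk_steps xs'_def by auto
    have len: "length xs' < length xs" using dec xs'_def by simp
    obtain ys where ys: "walk E ys" "distinct ys" "set ys \<subseteq> set xs'" "hd ys = hd xs'" "last ys = last xs'"
      using less.hyps[OF len w] by blast
    have "set xs' \<subseteq> set xs" using dec xs'_def by auto
    moreover have "hd xs' = hd xs" using dec xs'_def by (cases as) auto
    moreover have "last xs' = last xs" using dec xs'_def by (cases cs rule: rev_cases) auto
    ultimately show ?thesis using ys by (intro exI[of _ ys]) auto
  qed
qed

lemma graph_edge: "graph V E \<Longrightarrow> e \<in> E \<Longrightarrow> \<exists>u v. e = {u,v} \<and> u \<noteq> v \<and> u \<in> V \<and> v \<in> V"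
  unfolding graph_def by blast

lemma graph_edge2: "graph V E \<Longrightarrow> {a,b} \<in> E \<Longrightarrow> a \<noteq> b \<and> a \<in> V \<and> b \<in> V"
  unfolding graph_def by (metis doubleton_eq_iff)

lemma tree_no_bypass:
  assumes T: "tree VT ET" and e: "{x,y} \<in> ET" and r: "reach (ET - {{x,y}}) U y x"
  shows False
proof -
  have xy: "x \<noteq> y" using graph_edge2[of VT ET x y] T e unfolding tree_def by blast
  obtain xs where xs: "walk (ET - {{x,y}}) xs" "hd xs = y" "last xs = x" using r unfolding reach_def by blast
  obtain ys where ys: "walk (ET - {{x,y}}) ys" "distinct ys" "hd ys = y" "last ys = x"
    using walk_distinct[OF xs(1)] xs by metis
  obtain a ys1 where ys1: "ys = a # ys1" using ys by (cases ys) (auto simp: walk_def)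
  have "ys1 \<noteq> []" using ys ys1 xy by auto
  then obtain b ys2 where ys2: "ys1 = b # ys2" by (cases ys1) auto
  have "ys2 \<noteq> []"
  proof
    assume "ys2 = []"
    then have "ys = [y, x]" using ys ys1 ys2 by simp
    then show False using ys(1) by (auto simp: walk_Cons2 insert_commute)
  qed
  then have len: "length ys \<ge> 3" using ys1 ys2 by (cases ys2) auto
  have "walk ET ys" using ys(1) unfolding walk_steps by blast
  then have "is_cycle ET ys" unfolding is_cycle_def
    using len ys by (auto simp: insert_commute e)
  then show False using T unfolding tree_def by blast
qed

lemma tree_no_bypass_vertex:
  assumes T: "tree VT ET" and e1: "{c,a} \<in> ET" and e2: "{c,b} \<in> ET" and ab: "a \<noteq> b"
    and r: "reach ET (VT - {c}) a b"
  shows False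
proof -
  have "reach (ET \<inter> Pow (VT - {c})) (VT - {c}) a b" using reach_pow[OF r] .
  then have r1: "reach (ET - {{c,a}}) UNIV a b" by (rule reach_mono) auto
  have bc: "b \<noteq> c" using reach_in[OF r] by auto
  have "{b,c} \<noteq> {c,a}" using ab bc by (auto simp: doubleton_eq_iff)
  then have "reach (ET - {{c,a}}) UNIV b c" using e2 by (intro reach_edge) (auto simp: insert_commute)
  then have "reach (ET - {{c,a}}) UNIV a c" using reach_trans[OF r1] by blast
  then show False using tree_no_bypass[OF T e1] by blast
qed

inductive ltr :: "'b \<Rightarrow> 'b set \<Rightarrow> 'b set set \<Rightarrow> bool" where
  base: "ltr r {r} {}"
| step: "ltr r V E \<Longrightarrow> y \<in> V \<Longrightarrow> z \<notin> V \<Longrightarrow> ltr r (insert z V) (insert {y,z} E)"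

lemma ltr_props: "ltr r V E \<Longrightarrow> r \<in> V \<and> finite V \<and> finite E \<and> graph V E"
proof (induction rule: ltr.induct)
  case (base r) then show ?case by (simp add: graph_def)
next
  case (step r V E y z)
  have g: "\<forall>e\<in>E. \<exists>u v. e = {u,v} \<and> u \<noteq> v \<and> u \<in> V \<and> v \<in> V" using step unfolding graph_def by blast
  have "\<forall>e\<in>insert {y,z} E. \<exists>u v. e = {u,v} \<and> u \<noteq> v \<and> u \<in> insert z V \<and> v \<in> insert z V"
  proof
    fix e assume e: "e \<in> insert {y,z} E"
    show "\<exists>u v. e = {u,v} \<and> u \<noteq> v \<and> u \<in> insert z V \<and> v \<in> insert z V"
    proof (cases "e = {y,z}")
      case True then show ?thesis using step by blast
    next
      case False
      then obtain u v where "e = {u,v}" "u \<noteq> v" "u \<in> V" "v \<in> V" using g e by blast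
      then show ?thesis by blast
    qed
  qed
  then show ?case using step unfolding graph_def by simp
qed

lemma ltr_glue: "ltr s V2 E2 \<Longrightarrow> ltr r V1 E1 \<Longrightarrow> V1 \<inter> V2 = {s} \<Longrightarrow> ltr r (V1 \<union> V2) (E1 \<union> E2)"
proof (induction arbitrary: V1 E1 rule: ltr.induct)
  case (base r')
  then have "r' \<in> V1" by auto
  then show ?case using base by (simp add: insert_absorb)
next
  case (step r0 V E y z)
  have zV: "z \<notin> V" and yV: "y \<in> V" by fact+
  have int: "V1 \<inter> insert z V = {r0}" using step.prems(2) by simp
  have r0V: "r0 \<in> V" using ltr_props[OF step.hyps(1)] by blast
  have zr: "z \<noteq> r0" using r0V zV by blast
  have "V1 \<inter> V = {r0}" using int r0V by blast
  then have "ltr r (V1 \<union> V) (E1 \<union> E)" using step.IH step.prems(1) by blast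
  moreover have "z \<notin> V1 \<union> V" using int zV zr by blast
  ultimately have "ltr r (insert z (V1 \<union> V)) (insert {y,z} (E1 \<union> E))"
    using yV by (intro ltr.step) auto
  then show ?case by simp
qed

lemma ltr_map: "ltr r V E \<Longrightarrow> inj f \<Longrightarrow> ltr (f r) (f ` V) ((`) f ` E)"
proof (induction rule: ltr.induct)
  case (base r) then show ?case using ltr.base by simp
next
  case (step r V E y z)
  have "f z \<notin> f ` V" using step by (simp add: inj_image_mem_iff)
  then have "ltr (f r) (insert (f z) (f ` V)) (insert {f y, f z} ((`) f ` E))"
    using step by (intro ltr.step) auto
  then show ?case by simp
qed

lemma is_cycle_steps: "is_cycle E xs \<longleftrightarrow> length xs \<ge> 3 \<and> distinct xs \<and> steps (xs @ [hd xs]) \<subseteq> E"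
  unfolding is_cycle_def walk_steps by (cases "xs = []") (auto simp: steps_append)

lemma is_cycle_rotate1: "is_cycle E xs \<Longrightarrow> is_cycle E (rotate1 xs)"
proof -
  assume c: "is_cycle E xs"
  then obtain a ys where xs: "xs = a # ys" unfolding is_cycle_def by (cases xs) auto
  have ys: "ys \<noteq> []" using c xs unfolding is_cycle_def by auto
  have h1: "rotate1 xs @ [hd (rotate1 xs)] = ys @ [a, hd ys]" using xs ys by simp
  have h2: "steps (ys @ [a, hd ys]) = steps ys \<union> steps [a, hd ys] \<union> {{last ys, hd [a, hd ys]}}"
    using ys by (rule steps_append) simp
  have h3: "xs @ [hd xs] = a # (ys @ [a])" using xs by simp
  have h4: "steps (a # (ys @ [a])) = insert {a, hd (ys @ [a])} (steps (ys @ [a]))"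
    by (rule steps_Cons_ne) simp
  have h5: "steps (ys @ [a]) = steps ys \<union> steps [a] \<union> {{last ys, hd [a]}}"
    using ys by (rule steps_append) simp
  have "steps (rotate1 xs @ [hd (rotate1 xs)]) = steps (xs @ [hd xs])"
    unfolding h1 h2 h3 h4 h5 using ys by auto
  moreover have "length (rotate1 xs) = length xs" "distinct (rotate1 xs) = distinct xs" by auto
  ultimately show ?thesis using c unfolding is_cycle_steps by metis
qed

lemma is_cycle_rotate: "is_cycle E xs \<Longrightarrow> is_cycle E (rotate n xs)"
proof (induction n)
  case 0 then show ?case by simp
next
  case (Suc n)
  have "rotate (Suc n) xs = rotate1 (rotate n xs)" by (simp add: rotate_def)
  then show ?case using Suc is_cycle_rotate1 by metis
qed

lemma no_cycle_empty: "\<not> is_cycle {} xs"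
proof
  assume c: "is_cycle {} xs"
  then have "steps (xs @ [hd xs]) \<subseteq> {}" "length xs \<ge> 3" unfolding is_cycle_steps by auto
  then obtain a b ys where "xs = a # b # ys" by (metis One_nat_def Suc_1 Suc_le_length_iff numeral_3_eq_3 le_SucE)
  then show False using \<open>steps (xs @ [hd xs]) \<subseteq> {}\<close> by simp
qed

lemma tree_single: "tree {r} {}"
  unfolding tree_def graph_def connected_set_reach using no_cycle_empty
  by (auto intro: reach_refl)

lemma leaf_connected:
  assumes T: "connected_set E V" and y: "y \<in> V" and z: "z \<notin> V"
  shows "connected_set (insert {y,z} E) (insert z V)"
  unfolding connected_set_reach
proof (intro ballI)
  let ?E = "insert {y,z} E"
  fix u v assume u: "u \<in> insert z V" and v: "v \<in> insert z V"
  have old: "a \<in> V \<Longrightarrow> b \<in> V \<Longrightarrow> reach ?E (insert z V) a b" for a b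
  proof -
    assume "a \<in> V" "b \<in> V"
    then have "reach E V a b" using T unfolding connected_set_reach by blast
    then show ?thesis by (rule reach_mono) auto
  qed
  have zy: "reach ?E (insert z V) z y" using y by (intro reach_edge) (auto simp: insert_commute)
  have yz: "reach ?E (insert z V) y z" using y by (intro reach_edge) auto
  show "reach ?E (insert z V) u v"
  proof (cases "u = z")
    case True
    show ?thesis
    proof (cases "v = z")
      case True then show ?thesis using \<open>u = z\<close> by (simp add: reach_refl)
    next
      case False then have "v \<in> V" using v by simp
      then show ?thesis using True zy old[of y v] y reach_trans by metis
    qed
  next
    case False
    then have uV: "u \<in> V" using u by auto
    show ?thesis
    proof (cases "v = z")
      case True then show ?thesis using uV yz old[of u y] y reach_trans by metis
    next
      case False then have "v \<in> V" using v by simp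
      then show ?thesis using uV old by blast
    qed
  qed
qed

lemma leaf_acyclic:
  assumes NC: "\<And>xs. \<not> is_cycle E xs" and EV: "\<forall>e\<in>E. e \<subseteq> V" and z: "z \<notin> V" and y: "y \<in> V"
  shows "\<not> is_cycle (insert {y,z} E) xs"
proof
  let ?E = "insert {y,z} E"
  assume c: "is_cycle ?E xs"
  show False
  proof (cases "z \<in> set xs")
    case False
    have s1: "steps (xs @ [hd xs]) \<subseteq> ?E" using c unfolding is_cycle_steps by blast
    have s2: "set (xs @ [hd xs]) \<subseteq> set xs" using c unfolding is_cycle_def by (cases xs) auto
    have "steps (xs @ [hd xs]) \<subseteq> E"
    proof
      fix e assume e: "e \<in> steps (xs @ [hd xs])"
      then have "e \<subseteq> set xs" using steps_sub s2 by blast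
      then have "e \<noteq> {y,z}" using False by blast
      then show "e \<in> E" using s1 e by blast
    qed
    then have "is_cycle E xs" using c unfolding is_cycle_steps by blast
    then show False using NC by blast
  next
    case True
    then obtain i where i: "i < length xs" "xs ! i = z" by (metis in_set_conv_nth)
    let ?ys = "rotate i xs"
    have c2: "is_cycle ?E ?ys" using c is_cycle_rotate by blast
    have hz: "hd ?ys = z" using i hd_rotate_conv_nth[of xs i] by (cases xs) auto
    have l: "length ?ys \<ge> 3" using c2 unfolding is_cycle_def by blast
    obtain p q where pq: "?ys = p # q" using l by (cases ?ys) auto
    obtain a q' where aq: "q = a # q'" using l pq by (cases q) auto
    obtain zs b where zb: "q' = zs @ [b]" using l pq aq by (cases q' rule: rev_cases) auto
    have ys: "?ys = z # a # zs @ [b]" using pq aq zb hz by simp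
    have st: "steps (?ys @ [hd ?ys]) \<subseteq> ?E" and dist: "distinct ?ys" using c2 unfolding is_cycle_steps by auto
    have "steps (?ys @ [hd ?ys]) = steps (z # a # (zs @ [b] @ [z]))" using ys by simp
    also have "\<dots> = insert {z,a} (steps (a # (zs @ [b] @ [z])))" by simp
    finally have za: "{z,a} \<in> ?E" using st by blast
    have "steps ((z # a # zs @ [b]) @ [z]) = steps (z # a # zs @ [b]) \<union> steps [z] \<union> {{last (z # a # zs @ [b]), hd [z]}}"
      by (rule steps_append) auto
    then have "{b,z} \<in> steps (?ys @ [hd ?ys])" using ys by simp
    then have bz: "{b,z} \<in> ?E" using st by blast
    have "a = y" using za EV z by (auto simp: doubleton_eq_iff)
    moreover have "b = y" using bz EV z by (auto simp: doubleton_eq_iff)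
    ultimately show False using dist ys by auto
  qed
qed

lemma ltr_tree: "ltr r V E \<Longrightarrow> tree V E \<and> (\<forall>e\<in>E. e \<subseteq> V)"
proof (induction rule: ltr.induct)
  case (base r)
  then show ?case using tree_single by simp
next
  case (step r V E y z)
  have T: "tree V E" and EV: "\<forall>e\<in>E. e \<subseteq> V" using step.IH by auto
  have g: "graph (insert z V) (insert {y,z} E)" using ltr_props[OF ltr.step[OF step.hyps]] by blast
  have con: "connected_set (insert {y,z} E) (insert z V)"
    using leaf_connected[of E V y z] T step.hyps unfolding tree_def by blast
  have nc: "\<And>xs. \<not> is_cycle E xs" using T unfolding tree_def by blast
  have "\<not> is_cycle (insert {y,z} E) xs" for xs using leaf_acyclic[OF nc EV step.hyps(3) step.hyps(2)] .
  then show ?case using g con EV step.hyps unfolding tree_def by auto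
qed

lemma td_sep:
  fixes V :: "'a set" and VT :: "'b set"
  assumes td: "tree_decomposition V E VT ET W" and fin: "finite V" and S: "S \<subseteq> V"
  shows "\<exists>x\<in>VT. \<exists>(I::'b set) P. finite I \<and> (\<forall>i\<in>I. P i \<subseteq> V - W x) \<and> (\<forall>i\<in>I. \<forall>j\<in>I. i \<noteq> j \<longrightarrow> P i \<inter> P j = {})
     \<and> (\<Union>i\<in>I. P i) = V - W x
     \<and> (\<forall>u w i j. {u,w} \<in> E \<longrightarrow> i \<in> I \<longrightarrow> j \<in> I \<longrightarrow> u \<in> P i \<longrightarrow> w \<in> P j \<longrightarrow> i = j)
     \<and> (\<forall>i\<in>I. 2 * card (S \<inter> P i) \<le> card S)"
proof -
  have T: "tree VT ET" and Wsub: "\<forall>x\<in>VT. W x \<subseteq> V" and cov: "\<forall>v\<in>V. \<exists>x\<in>VT. v \<in> W x"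
    and edg: "\<forall>e\<in>E. \<exists>x\<in>VT. e \<subseteq> W x" and con: "\<forall>v\<in>V. connected_set ET {x\<in>VT. v \<in> W x}"
    using td unfolding tree_decomposition_def by auto
  have gT: "graph VT ET" and neT: "VT \<noteq> {}" and conT: "connected_set ET VT"
    using T unfolding tree_def by auto
  have fT: "finite VT" using gT unfolding graph_def by blast
  have nbr: "x \<in> VT \<and> y \<in> VT \<and> x \<noteq> y" if "{x,y} \<in> ET" for x y
    using graph_edge2[OF gT that] by blast
  have finS: "finite S" using S fin finite_subset by blast
  define R where "R x y = {t. reach ET (VT - {x}) y t}" for x y
  define P where "P x y = (\<Union>t\<in>R x y. W t) - W x" for x y
  have RVT: "R x y \<subseteq> VT - {x}" for x y using reach_in unfolding R_def by fast
  have yR: "y \<in> R x y" if "{x,y} \<in> ET" for x y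
    using nbr[OF that] unfolding R_def by (auto intro: reach_refl)
  have PV: "P x y \<subseteq> V - W x" for x y using Wsub RVT unfolding P_def by blast
  have exit: "\<exists>y. {x,y} \<in> ET \<and> t \<in> R x y" if "x \<in> VT" "t \<in> VT" "t \<noteq> x" for x t
  proof -
    have "reach ET VT x t" using conT that unfolding connected_set_reach by blast
    then show ?thesis using last_exit[of ET VT x t] that unfolding R_def by auto
  qed
  have cpath: "reach ET (VT - {x}) a b" if "v \<in> W a" "v \<in> W b" "a \<in> VT" "b \<in> VT" "v \<notin> W x" for v a b x
  proof -
    have "v \<in> V" using that Wsub by blast
    then have "reach ET {t\<in>VT. v \<in> W t} a b" using con that unfolding connected_set_reach by blast
    then show ?thesis by (rule reach_mono) (use that in auto)
  qed
  have disj1: "P x y \<inter> P x y' = {}" if e1: "{x,y} \<in> ET" and e2: "{x,y'} \<in> ET" and yy: "y \<noteq> y'" for x y y'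
  proof (rule ccontr)
    assume "P x y \<inter> P x y' \<noteq> {}"
    then obtain v a b where v: "a \<in> R x y" "v \<in> W a" "b \<in> R x y'" "v \<in> W b" "v \<notin> W x"
      unfolding P_def by blast
    have ab: "reach ET (VT - {x}) a b" using cpath[of v a b x] v RVT by blast
    have "reach ET (VT - {x}) y a" using v unfolding R_def by blast
    then have "reach ET (VT - {x}) y b" using ab reach_trans by metis
    moreover have "reach ET (VT - {x}) b y'" using v reach_sym unfolding R_def by fast
    ultimately have "reach ET (VT - {x}) y y'" using reach_trans by metis
    then show False using tree_no_bypass_vertex[OF T e1 e2 yy] by blast
  qed
  have disj2: "P x y \<inter> P y x = {}" if e: "{x,y} \<in> ET" for x y
  proof (rule ccontr)
    assume "P x y \<inter> P y x \<noteq> {}"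
    then obtain v a b where v: "a \<in> R x y" "v \<in> W a" "b \<in> R y x" "v \<in> W b" "v \<notin> W x" "v \<notin> W y"
      unfolding P_def by blast
    have ab: "reach ET (VT - {x}) a b" using cpath[of v a b x] v RVT by blast
    have "reach ET (VT - {x}) y a" using v unfolding R_def by blast
    then have r1: "reach ET (VT - {x}) y b" using ab reach_trans by metis
    have r2: "reach ET (VT - {y}) b x" using v reach_sym unfolding R_def by fast
    have s1: "reach (ET - {{x,y}}) UNIV y b"
      using reach_pow[OF r1] by (rule reach_mono) auto
    have s2: "reach (ET - {{x,y}}) UNIV b x"
      using reach_pow[OF r2] by (rule reach_mono) auto
    show False using tree_no_bypass[OF T e reach_trans[OF s1 s2]] .
  qed
  have inP: "u \<in> P x y" if "t \<in> R x y" "u \<in> W t" "u \<notin> W x" for x y t u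
    using that unfolding P_def by blast
  have cross: "y = y'" if x: "x \<in> VT" and uw: "{u,w} \<in> E" and e1: "{x,y} \<in> ET" and e2: "{x,y'} \<in> ET"
    and u: "u \<in> P x y" and w: "w \<in> P x y'" for x y y' u w
  proof -
    obtain t where t: "t \<in> VT" "{u,w} \<subseteq> W t" using edg uw by blast
    have ux: "u \<notin> W x" and wx: "w \<notin> W x" using u w unfolding P_def by auto
    then have "t \<noteq> x" using t by blast
    then obtain y'' where y'': "{x,y''} \<in> ET" "t \<in> R x y''" using exit[OF x t(1)] by blast
    have "u \<in> P x y''" using inP[OF y''(2) _ ux] t by blast
    then have "y = y''" using disj1[OF e1 y''(1)] u by blast
    moreover have "w \<in> P x y''" using inP[OF y''(2) _ wx] t by blast
    then have "y' = y''" using disj1[OF e2 y''(1)] w by blast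
    ultimately show ?thesis by simp
  qed
  have cover: "\<exists>y. {x,y} \<in> ET \<and> v \<in> P x y" if x: "x \<in> VT" and v: "v \<in> V" "v \<notin> W x" for x v
  proof -
    obtain t where t: "t \<in> VT" "v \<in> W t" using cov v by blast
    then have "t \<noteq> x" using v by blast
    then obtain y where y: "{x,y} \<in> ET" "t \<in> R x y" using exit[OF x t(1)] by blast
    then show ?thesis using inP[OF y(2) t(2) v(2)] by blast
  qed
  have Rsub: "R y y' \<subset> R x y" if e: "{x,y} \<in> ET" and e': "{y,y'} \<in> ET" and yx: "y' \<noteq> x" for x y y'
  proof
    show "R y y' \<subseteq> R x y"
    proof
      fix t assume "t \<in> R y y'"
      then obtain xs where xs: "walk ET xs" "set xs \<subseteq> VT - {y}" "hd xs = y'" "last xs = t"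
        unfolding R_def reach_def by blast
      have "x \<notin> set xs"
      proof
        assume "x \<in> set xs"
        then have "reach ET (VT - {y}) y' x" using reach_mid[OF xs(1) xs(2)] xs(3) by metis
        moreover have "{y,x} \<in> ET" using e by (simp add: insert_commute)
        ultimately show False using tree_no_bypass_vertex[OF T e' _ yx] by blast
      qed
      then have r: "reach ET (VT - {x}) y' t" unfolding reach_def using xs by blast
      have "reach ET (VT - {x}) y y'" using nbr[OF e] nbr[OF e'] yx e' by (intro reach_edge) auto
      then show "t \<in> R x y" using r reach_trans unfolding R_def by fast
    qed
    show "R y y' \<noteq> R x y" using yR[OF e] RVT[of y y'] by blast
  qed
  have sumle: "card (S \<inter> P x y) + card (S \<inter> P y x) \<le> card S" if e: "{x,y} \<in> ET" for x y
  proof -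
    have "card (S \<inter> P x y) + card (S \<inter> P y x) = card ((S \<inter> P x y) \<union> (S \<inter> P y x))"
      using disj2[OF e] finS by (intro card_Un_disjoint[symmetric]) auto
    also have "\<dots> \<le> card S" using finS by (intro card_mono) auto
    finally show ?thesis .
  qed
  have good: "\<exists>x\<in>VT. \<forall>y. {x,y} \<in> ET \<longrightarrow> 2 * card (S \<inter> P x y) \<le> card S"
  proof (cases "\<exists>x y. {x,y} \<in> ET \<and> card S < 2 * card (S \<inter> P x y)")
    case False
    then show ?thesis using neT by (meson ex_in_conv not_le)
  next
    case True
    define m where "m = (LEAST n. \<exists>x y. ({x,y} \<in> ET \<and> card S < 2 * card (S \<inter> P x y)) \<and> card (R x y) = n)"
    have ex: "\<exists>n x y. ({x,y} \<in> ET \<and> card S < 2 * card (S \<inter> P x y)) \<and> card (R x y) = n" using True by blast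
    obtain x y where xy: "{x,y} \<in> ET" "card S < 2 * card (S \<inter> P x y)" "card (R x y) = m"
      using LeastI_ex[OF ex] unfolding m_def by blast
    have minim: "m \<le> card (R x' y')" if "{x',y'} \<in> ET" "card S < 2 * card (S \<inter> P x' y')" for x' y'
      unfolding m_def using that by (intro Least_le) blast
    have "\<forall>y'. {y,y'} \<in> ET \<longrightarrow> 2 * card (S \<inter> P y y') \<le> card S"
    proof (intro allI impI)
      fix y' assume e': "{y,y'} \<in> ET"
      show "2 * card (S \<inter> P y y') \<le> card S"
      proof (cases "y' = x")
        case True
        then show ?thesis using sumle[OF xy(1)] xy(2) by simp
      next
        case False
        have fin: "finite (R x y)" using RVT fT finite_subset by blast
        have "card (R y y') < card (R x y)" using psubset_card_mono[OF fin Rsub[OF xy(1) e' False]] .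
        then show ?thesis using minim[OF e'] xy(3) by fastforce
      qed
    qed
    then show ?thesis using nbr[OF xy(1)] by blast
  qed
  then obtain x where x: "x \<in> VT" and xg: "\<forall>y. {x,y} \<in> ET \<longrightarrow> 2 * card (S \<inter> P x y) \<le> card S" by blast
  define I where "I = {y. {x,y} \<in> ET}"
  have "I \<subseteq> VT" using nbr unfolding I_def by blast
  then have f1: "finite I" using fT finite_subset by blast
  have f2: "\<forall>i\<in>I. P x i \<subseteq> V - W x" using PV by blast
  have f3: "\<forall>i\<in>I. \<forall>j\<in>I. i \<noteq> j \<longrightarrow> P x i \<inter> P x j = {}"
  proof (intro ballI impI)
    fix i j assume "i \<in> I" "j \<in> I" "i \<noteq> j"
    then show "P x i \<inter> P x j = {}" using disj1[of x i j] unfolding I_def by blast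
  qed
  have f4: "(\<Union>i\<in>I. P x i) = V - W x"
  proof
    show "(\<Union>i\<in>I. P x i) \<subseteq> V - W x" using PV by blast
    show "V - W x \<subseteq> (\<Union>i\<in>I. P x i)"
    proof
      fix v assume "v \<in> V - W x"
      then obtain y where "{x,y} \<in> ET" "v \<in> P x y" using cover[OF x] by blast
      then show "v \<in> (\<Union>i\<in>I. P x i)" unfolding I_def by blast
    qed
  qed
  have f5: "\<forall>u w i j. {u,w} \<in> E \<longrightarrow> i \<in> I \<longrightarrow> j \<in> I \<longrightarrow> u \<in> P x i \<longrightarrow> w \<in> P x j \<longrightarrow> i = j"
  proof (intro allI impI)
    fix u w i j assume "{u,w} \<in> E" "i \<in> I" "j \<in> I" "u \<in> P x i" "w \<in> P x j"
    then show "i = j" using cross[OF x, of u w i j] unfolding I_def by blast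
  qed
  have f6: "\<forall>i\<in>I. 2 * card (S \<inter> P x i) \<le> card S" using xg unfolding I_def by blast
  show ?thesis
    apply (rule bexI[OF _ x])
    apply (rule exI[of _ I])
    apply (rule exI[of _ "P x"])
    using f1 f2 f3 f4 f5 f6 by blast
qed

lemma subset_sum:
  fixes s :: "'i \<Rightarrow> nat"
  assumes "finite I" "\<forall>i\<in>I. s i \<le> M" "0 < c" "c \<le> sum s I"
  shows "\<exists>J\<subseteq>I. c \<le> sum s J \<and> sum s J < c + M"
  using assms
proof (induction I rule: finite_induct)
  case empty then show ?case by simp
next
  case (insert a N)
  show ?case
  proof (cases "c \<le> sum s N")
    case True
    then obtain J where "J \<subseteq> N" "c \<le> sum s J" "sum s J < c + M" using insert by auto
    then show ?thesis by blast
  next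
    case False
    have "sum s (insert a N) = s a + sum s N" using insert by simp
    moreover have "s a \<le> M" using insert by simp
    ultimately show ?thesis using False insert.prems by (intro exI[of _ "insert a N"]) auto
  qed
qed

lemma grouping:
  fixes V :: "'a set" and I :: "'i set"
  assumes fin: "finite V" and X0: "X0 \<subseteq> V" "card X0 \<le> k" and k1: "k \<ge> 1" and I: "finite I"
    and Psub: "\<forall>i\<in>I. P i \<subseteq> V - X0" and Pdisj: "\<forall>i\<in>I. \<forall>j\<in>I. i \<noteq> j \<longrightarrow> P i \<inter> P j = {}"
    and Pcov: "(\<Union>i\<in>I. P i) = V - X0"
    and cross: "\<forall>u w i j. {u,w} \<in> E \<longrightarrow> i \<in> I \<longrightarrow> j \<in> I \<longrightarrow> u \<in> P i \<longrightarrow> w \<in> P j \<longrightarrow> i = j"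
    and half: "\<forall>i\<in>I. 2 * card (S \<inter> P i) \<le> card S" and S: "S \<subseteq> V" and big: "10 * k \<le> card S"
  shows "\<exists>X A B. X \<subseteq> V \<and> card X = k \<and> A \<inter> X = {} \<and> B \<inter> X = {} \<and> A \<inter> B = {} \<and> A \<union> X \<union> B = V
     \<and> (\<forall>u w. {u,w} \<in> E \<longrightarrow> u \<in> A \<longrightarrow> w \<notin> B) \<and> 3*k \<le> card (S \<inter> A) \<and> 3*k \<le> card (S \<inter> B)"
proof -
  have finS: "finite S" using S fin finite_subset by blast
  have fX0: "finite X0" using X0 fin finite_subset by blast
  have "card S \<le> card (S - X0) + card X0"
  proof -
    have "S \<subseteq> (S - X0) \<union> X0" by blast
    then have "card S \<le> card ((S - X0) \<union> X0)" using fX0 finS by (intro card_mono) auto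
    also have "\<dots> \<le> card (S - X0) + card X0" by (rule card_Un_le)
    finally show ?thesis .
  qed
  then have cSX: "k - card X0 \<le> card (S - X0)" using big X0 by linarith
  obtain Z where Z: "Z \<subseteq> S - X0" "card Z = k - card X0"
    using obtain_subset_with_card_n[OF cSX] by blast
  have fZ: "finite Z" using Z finS finite_subset by blast
  define X where "X = X0 \<union> Z"
  have XV: "X \<subseteq> V" using X0 Z S unfolding X_def by blast
  have cX: "card X = k" unfolding X_def using card_Un_disjoint[OF fX0 fZ] Z X0 by auto
  have fX: "finite X" using fX0 fZ X_def by blast
  define Q where "Q i = P i - Z" for i
  have Qdisj: "\<forall>i\<in>I. \<forall>j\<in>I. i \<noteq> j \<longrightarrow> Q i \<inter> Q j = {}" using Pdisj unfolding Q_def by blast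
  have Qcov: "(\<Union>i\<in>I. Q i) = V - X" using Pcov unfolding Q_def X_def by blast
  define s where "s i = card (S \<inter> Q i)" for i
  have cardU: "card (S \<inter> (\<Union>i\<in>J. Q i)) = sum s J" if J: "J \<subseteq> I" for J
  proof -
    have fJ: "finite J" using J I finite_subset by blast
    have "S \<inter> (\<Union>i\<in>J. Q i) = (\<Union>i\<in>J. S \<inter> Q i)" by blast
    moreover have "card (\<Union>i\<in>J. S \<inter> Q i) = (\<Sum>i\<in>J. card (S \<inter> Q i))"
      using fJ finS Qdisj J by (intro card_UN_disjoint) auto
    ultimately show ?thesis unfolding s_def by simp
  qed
  have "S \<inter> (\<Union>i\<in>I. Q i) = S - X" using Qcov S by blast
  then have tot: "sum s I = card (S - X)" using cardU[of I] by simp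
  have "card S \<le> card (S - X) + card X"
  proof -
    have "S \<subseteq> (S - X) \<union> X" by blast
    then have "card S \<le> card ((S - X) \<union> X)" using fX finS by (intro card_mono) auto
    also have "\<dots> \<le> card (S - X) + card X" by (rule card_Un_le)
    finally show ?thesis .
  qed
  then have totk: "card S \<le> sum s I + k" using tot cX by simp
  have sle: "2 * s i \<le> card S" if "i \<in> I" for i
  proof -
    have "s i \<le> card (S \<inter> P i)" unfolding s_def Q_def using finS by (intro card_mono) auto
    moreover have "2 * card (S \<inter> P i) \<le> card S" using half that by blast
    ultimately show ?thesis by linarith
  qed
  obtain J where J: "J \<subseteq> I" "3*k \<le> sum s J" "sum s J + 3*k \<le> sum s I"
  proof (cases "\<exists>i\<in>I. 3*k \<le> s i")
    case True
    then obtain i where i: "i \<in> I" "3*k \<le> s i" by blast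
    have "sum s {i} + 3*k \<le> sum s I" using sle[OF i(1)] totk big by simp
    then show ?thesis using that[of "{i}"] i by simp
  next
    case False
    then have "\<forall>i\<in>I. s i \<le> 3*k" by auto
    moreover have "3*k \<le> sum s I" using totk big by simp
    ultimately obtain J where "J \<subseteq> I" "3*k \<le> sum s J" "sum s J < 3*k + 3*k"
      using subset_sum[OF I, of s "3*k" "3*k"] k1 by auto
    then show ?thesis using that[of J] totk big by simp
  qed
  define A where "A = (\<Union>i\<in>J. Q i)"
  define B where "B = (\<Union>i\<in>I - J. Q i)"
  have cA: "card (S \<inter> A) = sum s J" unfolding A_def using cardU[OF J(1)] .
  have cB: "card (S \<inter> B) = sum s (I - J)" unfolding B_def using cardU[of "I - J"] by blast
  have "sum s I = sum s (I - J) + sum s J" using sum.subset_diff[OF J(1) I] .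
  then have g1: "3*k \<le> card (S \<inter> B)" using cB J by linarith
  have g2: "3*k \<le> card (S \<inter> A)" using cA J by simp
  have AB: "A \<union> B = (\<Union>i\<in>I. Q i)"
  proof -
    have "A \<union> B = (\<Union>i\<in>J \<union> (I - J). Q i)" unfolding A_def B_def by (rule UN_Un[symmetric])
    also have "J \<union> (I - J) = I" using J(1) by blast
    finally show ?thesis .
  qed
  then have AB2: "A \<union> B = V - X" using Qcov by simp
  have g3: "A \<inter> X = {}" "B \<inter> X = {}" using AB2 by blast+
  have g4: "A \<inter> B = {}"
  proof (rule ccontr)
    assume "A \<inter> B \<noteq> {}"
    then obtain v i j where "i \<in> J" "j \<in> I - J" "v \<in> Q i" "v \<in> Q j" unfolding A_def B_def by blast
    moreover have "i \<noteq> j" using calculation by blast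
    ultimately show False using Qdisj J(1) by blast
  qed
  have g5: "A \<union> X \<union> B = V" using AB2 XV by blast
  have g6: "\<forall>u w. {u,w} \<in> E \<longrightarrow> u \<in> A \<longrightarrow> w \<notin> B"
  proof (intro allI impI notI)
    fix u w assume "{u,w} \<in> E" "u \<in> A" "w \<in> B"
    then obtain i j where "i \<in> J" "j \<in> I - J" "u \<in> P i" "w \<in> P j" unfolding A_def B_def Q_def by blast
    moreover have "i \<in> I" "j \<in> I" using calculation J(1) by auto
    ultimately have "i = j" using cross \<open>{u,w} \<in> E\<close> by blast
    then show False using \<open>i \<in> J\<close> \<open>j \<in> I - J\<close> by blast
  qed
  show ?thesis
    apply (rule exI[of _ X])
    apply (rule exI[of _ A])
    apply (rule exI[of _ B])
    using XV cX g1 g2 g3 g4 g5 g6 by blast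
qed

definition ind :: "'a set set \<Rightarrow> 'a set \<Rightarrow> 'a set set" where
  "ind E U = {e\<in>E. e \<subseteq> U}"

lemma graph_ind: "graph V E \<Longrightarrow> U \<subseteq> V \<Longrightarrow> graph U (ind E U)"
proof -
  assume g: "graph V E" and U: "U \<subseteq> V"
  have "finite U" using g U unfolding graph_def using finite_subset by blast
  moreover have "\<forall>e\<in>ind E U. \<exists>u v. e = {u,v} \<and> u \<noteq> v \<and> u \<in> U \<and> v \<in> U"
  proof
    fix e assume e: "e \<in> ind E U"
    then have "e \<in> E" "e \<subseteq> U" unfolding ind_def by auto
    then obtain u v where "e = {u,v}" "u \<noteq> v" using g unfolding graph_def by blast
    then show "\<exists>u v. e = {u,v} \<and> u \<noteq> v \<and> u \<in> U \<and> v \<in> U" using \<open>e \<subseteq> U\<close> by blast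
  qed
  ultimately show ?thesis unfolding graph_def by blast
qed

lemma nbrs_sub: "graph V E \<Longrightarrow> {u. {u,v} \<in> E} \<subseteq> V"
proof
  fix u assume g: "graph V E" and "u \<in> {u. {u,v} \<in> E}"
  then have "{u,v} \<in> E" by simp
  then show "u \<in> V" using graph_edge2[OF g] by blast
qed

lemma nbrs_fin: "graph V E \<Longrightarrow> finite {u. {u,v} \<in> E}"
  using nbrs_sub[of V E v] unfolding graph_def using finite_subset by blast

lemma deg_ind: "graph V E \<Longrightarrow> max_degree_le V E d \<Longrightarrow> U \<subseteq> V \<Longrightarrow> max_degree_le U (ind E U) d"
  unfolding max_degree_le_def
proof
  fix v assume g: "graph V E" and m: "\<forall>v\<in>V. degree E v \<le> d" and U: "U \<subseteq> V" and v: "v \<in> U"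
  have "{u. {u,v} \<in> ind E U} \<subseteq> {u. {u,v} \<in> E}" unfolding ind_def by blast
  then have "degree (ind E U) v \<le> degree E v" unfolding degree_def using nbrs_fin[OF g] by (intro card_mono)
  moreover have "degree E v \<le> d" using m U v by blast
  ultimately show "degree (ind E U) v \<le> d" by linarith
qed

lemma tw_ind: "graph V E \<Longrightarrow> treewidth_le V E w \<Longrightarrow> U \<subseteq> V \<Longrightarrow> treewidth_le U (ind E U) w"
proof -
  assume g: "graph V E" and tw: "treewidth_le V E w" and U: "U \<subseteq> V"
  obtain VT :: "nat set" and ET W where td: "tree_decomposition V E VT ET W" and bw: "\<forall>x\<in>VT. card (W x) \<le> w + 1"
    using tw unfolding treewidth_le_def by blast
  have fin: "finite V" using g unfolding graph_def by blast
  have T: "tree VT ET" and Wsub: "\<forall>x\<in>VT. W x \<subseteq> V" and cov: "\<forall>v\<in>V. \<exists>x\<in>VT. v \<in> W x"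
    and edg: "\<forall>e\<in>E. \<exists>x\<in>VT. e \<subseteq> W x" and con: "\<forall>v\<in>V. connected_set ET {x\<in>VT. v \<in> W x}"
    using td unfolding tree_decomposition_def by auto
  have a1: "\<forall>x\<in>VT. W x \<inter> U \<subseteq> U" by blast
  have a2: "\<forall>v\<in>U. \<exists>x\<in>VT. v \<in> W x \<inter> U" using cov U by blast
  have a3: "\<forall>e\<in>ind E U. \<exists>x\<in>VT. e \<subseteq> W x \<inter> U"
  proof
    fix e assume "e \<in> ind E U"
    then have "e \<in> E" "e \<subseteq> U" unfolding ind_def by auto
    then show "\<exists>x\<in>VT. e \<subseteq> W x \<inter> U" using edg by blast
  qed
  have a4: "\<forall>v\<in>U. connected_set ET {x\<in>VT. v \<in> W x \<inter> U}"
  proof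
    fix v assume v: "v \<in> U"
    have "{x\<in>VT. v \<in> W x \<inter> U} = {x\<in>VT. v \<in> W x}" using v by blast
    then show "connected_set ET {x\<in>VT. v \<in> W x \<inter> U}" using con v U by auto
  qed
  have "tree_decomposition U (ind E U) VT ET (\<lambda>t. W t \<inter> U)"
    unfolding tree_decomposition_def using T a1 a2 a3 a4 by blast
  moreover have "\<forall>x\<in>VT. card (W x \<inter> U) \<le> w + 1"
  proof
    fix x assume x: "x \<in> VT"
    have "finite (W x)" using Wsub x fin finite_subset by blast
    then have "card (W x \<inter> U) \<le> card (W x)" by (intro card_mono) auto
    then show "card (W x \<inter> U) \<le> w + 1" using bw x by force
  qed
  ultimately show ?thesis unfolding treewidth_le_def by blast
qed

definition gtp :: "'a set \<Rightarrow> 'a set set \<Rightarrow> nat \<Rightarrow> nat \<Rightarrow> nat set \<Rightarrow> nat set set \<Rightarrow> (nat \<Rightarrow> 'a set) \<Rightarrow> bool" where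
  "gtp V E w D VT ET B \<longleftrightarrow> ltr 0 VT ET \<and> (\<forall>x\<in>VT. \<forall>y\<in>VT. x \<noteq> y \<longrightarrow> B x \<inter> B y = {}) \<and> (\<Union>x\<in>VT. B x) = V
     \<and> (\<forall>v u x y. {v,u} \<in> E \<longrightarrow> x \<in> VT \<longrightarrow> y \<in> VT \<longrightarrow> v \<in> B x \<longrightarrow> u \<in> B y \<longrightarrow> x = y \<or> {x,y} \<in> ET)
     \<and> (\<forall>x\<in>VT. card (B x) \<le> w) \<and> (\<forall>x\<in>VT. degree ET x \<le> D)"

lemma degree_img:
  assumes f: "inj f"
  shows "degree ((`) f ` E) (f v) = degree E v"
proof -
  have "{u. {u, f v} \<in> (`) f ` E} = f ` {u. {u,v} \<in> E}"
  proof
    show "f ` {u. {u,v} \<in> E} \<subseteq> {u. {u, f v} \<in> (`) f ` E}"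
    proof
      fix x assume "x \<in> f ` {u. {u,v} \<in> E}"
      then obtain a where a: "x = f a" "{a,v} \<in> E" by blast
      have "f ` {a,v} = {f a, f v}" by simp
      then show "x \<in> {u. {u, f v} \<in> (`) f ` E}" using a by (metis (mono_tags, lifting) image_eqI mem_Collect_eq)
    qed
    show "{u. {u, f v} \<in> (`) f ` E} \<subseteq> f ` {u. {u,v} \<in> E}"
    proof
      fix x assume "x \<in> {u. {u, f v} \<in> (`) f ` E}"
      then obtain e where e: "e \<in> E" "{x, f v} = f ` e" by blast
      then have "x \<in> f ` e" by blast
      then obtain a where a: "a \<in> e" "x = f a" by blast
      have "f v \<in> f ` e" using e by blast
      then have ve: "v \<in> e" using f by (simp add: inj_image_mem_iff)
      have "e \<subseteq> {a,v}"
      proof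
        fix y assume "y \<in> e"
        then have "f y \<in> {f a, f v}" using e a by blast
        then show "y \<in> {a,v}" using f by (auto dest: injD)
      qed
      then have "e = {a,v}" using a ve by blast
      then show "x \<in> f ` {u. {u,v} \<in> E}" using e a by blast
    qed
  qed
  then show ?thesis unfolding degree_def using f by (simp add: card_image inj_on_subset)
qed

lemma degree_out: "(\<forall>e\<in>E2. v \<notin> e) \<Longrightarrow> degree (E1 \<union> E2) v = degree E1 v"
proof -
  assume h: "\<forall>e\<in>E2. v \<notin> e"
  have "{u. {u,v} \<in> E1 \<union> E2} = {u. {u,v} \<in> E1}" using h by blast
  then show ?thesis unfolding degree_def by simp
qed

lemma degree_Un_le: "finite {u. {u,v} \<in> E1} \<Longrightarrow> finite {u. {u,v} \<in> E2} \<Longrightarrow> degree (E1 \<union> E2) v \<le> degree E1 v + degree E2 v"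
proof -
  have "{u. {u,v} \<in> E1 \<union> E2} = {u. {u,v} \<in> E1} \<union> {u. {u,v} \<in> E2}" by blast
  then show ?thesis unfolding degree_def by (simp add: card_Un_le)
qed

lemma degree_insert_le:
  assumes "finite {u. {u,v} \<in> E}"
  shows "degree (insert e E) v \<le> degree E v + 1"
proof -
  have sub: "{u. {u,v} = e} \<subseteq> {u. {u,v} = e}" by simp
  have fin: "finite {u. {u,v} = e}"
  proof (cases "\<exists>u. {u,v} = e")
    case True
    then obtain u where "{u,v} = e" by blast
    then have "{u. {u,v} = e} \<subseteq> e" by blast
    moreover have "finite e" using \<open>{u,v} = e\<close> by blast
    ultimately show ?thesis using finite_subset by blast
  next
    case False then show ?thesis by simp
  qed
  have "\<forall>x\<in>{u. {u,v} = e}. \<forall>y\<in>{u. {u,v} = e}. x = y" by (auto simp: doubleton_eq_iff)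
  then have "card {u. {u,v} = e} \<le> 1" using card_le_Suc0_iff_eq[OF fin] by simp
  moreover have "{u. {u,v} \<in> insert e E} = {u. {u,v} = e} \<union> {u. {u,v} \<in> E}" by blast
  ultimately show ?thesis unfolding degree_def using card_Un_le[of "{u. {u,v} = e}" "{u. {u,v} \<in> E}"] by simp
qed

lemma ltr_nbrs_fin: "ltr r VT ET \<Longrightarrow> finite {u. {u,v} \<in> ET}"
  using ltr_props nbrs_fin by metis

lemma gtp_single: "card V \<le> w \<Longrightarrow> gtp V E w D {0} {} (\<lambda>_. V)"
  unfolding gtp_def degree_def by (auto intro: ltr.base)

lemma gtp_extend:
  assumes G: "gtp (V - S) (ind E (V - S)) w D VT ET B" and SV: "S \<subseteq> V"
    and cS: "card S \<le> w" and N: "\<forall>u x. {u,x} \<in> E \<longrightarrow> u \<in> S \<longrightarrow> x \<in> V - S \<longrightarrow> x \<in> B 0"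
    and dg: "degree ET 0 + 1 \<le> D"
  shows "gtp V E w D (insert 0 (Suc ` VT)) (insert {0,1} ((`) Suc ` ET)) (\<lambda>n. if n = 0 then S else B (n - 1))
     \<and> degree (insert {0,1} ((`) Suc ` ET)) 0 = 1"
proof -
  let ?VT = "insert 0 (Suc ` VT)" and ?ET = "insert {0,1} ((`) Suc ` ET)" and ?B = "\<lambda>n::nat. if n = 0 then S else B (n - 1)"
  have L: "ltr 0 VT ET" and Bd: "\<forall>x\<in>VT. \<forall>y\<in>VT. x \<noteq> y \<longrightarrow> B x \<inter> B y = {}" and BU: "(\<Union>x\<in>VT. B x) = V - S"
    and Be: "\<forall>v u x y. {v,u} \<in> ind E (V - S) \<longrightarrow> x \<in> VT \<longrightarrow> y \<in> VT \<longrightarrow> v \<in> B x \<longrightarrow> u \<in> B y \<longrightarrow> x = y \<or> {x,y} \<in> ET"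
    and Bw: "\<forall>x\<in>VT. card (B x) \<le> w" and Bdeg: "\<forall>x\<in>VT. degree ET x \<le> D"
    using G unfolding gtp_def by auto
  have r0: "0 \<in> VT" using ltr_props[OF L] by blast
  have L1: "ltr (Suc 0) (Suc ` VT) ((`) Suc ` ET)" using ltr_map[OF L, of Suc] by simp
  have L0: "ltr (0::nat) {0} {}" by (rule ltr.base)
  have L2: "ltr (0::nat) (insert 1 {0}) (insert {0,1} {})" using L0 by (rule ltr.step) auto
  have "ltr 0 (insert 1 {0} \<union> Suc ` VT) (insert {0,1} {} \<union> (`) Suc ` ET)"
    using ltr_glue[OF L1 L2] r0 by auto
  moreover have "insert 1 {0} \<union> Suc ` VT = ?VT" using r0 by auto
  ultimately have Lt: "ltr 0 ?VT ?ET" by simp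
  have EVT: "\<forall>e\<in>ET. e \<subseteq> VT" using ltr_tree[OF L] by blast
  have BVS: "B x \<subseteq> V - S" if "x \<in> VT" for x using BU that by blast
  have d1: "\<forall>x\<in>?VT. \<forall>y\<in>?VT. x \<noteq> y \<longrightarrow> ?B x \<inter> ?B y = {}"
  proof (intro ballI impI)
    fix x y assume x: "x \<in> ?VT" and y: "y \<in> ?VT" and xy: "x \<noteq> y"
    show "?B x \<inter> ?B y = {}"
    proof (cases "x = 0")
      case True
      then obtain y' where "y = Suc y'" "y' \<in> VT" using y xy by auto
      then show ?thesis using True BVS by auto
    next
      case False
      then obtain x' where x': "x = Suc x'" "x' \<in> VT" using x by auto
      show ?thesis
      proof (cases "y = 0")
        case True then show ?thesis using x' BVS by auto
      next
        case False
        then obtain y' where "y = Suc y'" "y' \<in> VT" using y by auto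
        then show ?thesis using x' Bd xy by auto
      qed
    qed
  qed
  have d2: "(\<Union>x\<in>?VT. ?B x) = V"
  proof -
    have "(\<Union>x\<in>?VT. ?B x) = S \<union> (\<Union>x\<in>Suc ` VT. B (x - 1))" by auto
    also have "(\<Union>x\<in>Suc ` VT. B (x - 1)) = (\<Union>x\<in>VT. B x)" by auto
    finally show ?thesis using BU SV by auto
  qed
  have nb: "x \<in> VT \<Longrightarrow> u \<in> B x \<Longrightarrow> u \<in> B 0 \<Longrightarrow> x = 0" for x u using Bd r0 by blast
  have d3: "\<forall>v u x y. {v,u} \<in> E \<longrightarrow> x \<in> ?VT \<longrightarrow> y \<in> ?VT \<longrightarrow> v \<in> ?B x \<longrightarrow> u \<in> ?B y \<longrightarrow> x = y \<or> {x,y} \<in> ?ET"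
  proof (intro allI impI)
    fix v u x y assume e: "{v,u} \<in> E" and x: "x \<in> ?VT" and y: "y \<in> ?VT" and v: "v \<in> ?B x" and u: "u \<in> ?B y"
    show "x = y \<or> {x,y} \<in> ?ET"
    proof (cases "x = 0")
      case x0: True
      show ?thesis
      proof (cases "y = 0")
        case True then show ?thesis using x0 by simp
      next
        case False
        then obtain y' where y': "y = Suc y'" "y' \<in> VT" using y by auto
        have "v \<in> S" using v x0 by simp
        moreover have "u \<in> B y'" using u y' by simp
        ultimately have "u \<in> B 0" using N e BVS[OF y'(2)] by blast
        then have "y' = 0" using nb[OF y'(2) \<open>u \<in> B y'\<close>] by blast
        then show ?thesis using x0 y' by simp
      qed
    next
      case False
      then obtain x' where x': "x = Suc x'" "x' \<in> VT" using x by auto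
      have vB: "v \<in> B x'" using v x' by simp
      show ?thesis
      proof (cases "y = 0")
        case y0: True
        have "u \<in> S" using u y0 by simp
        moreover have "{u,v} \<in> E" using e by (simp add: insert_commute)
        ultimately have "v \<in> B 0" using N vB BVS[OF x'(2)] by blast
        then have "x' = 0" using nb[OF x'(2) vB] by blast
        then show ?thesis using y0 x' by (simp add: insert_commute)
      next
        case False
        then obtain y' where y': "y = Suc y'" "y' \<in> VT" using y by auto
        have uB: "u \<in> B y'" using u y' by simp
        have "{v,u} \<in> ind E (V - S)" using e vB uB BVS x'(2) y'(2) unfolding ind_def by blast
        then have "x' = y' \<or> {x',y'} \<in> ET" using Be x'(2) y'(2) vB uB by blast
        then show ?thesis
        proof
          assume "x' = y'" then show ?thesis using x' y' by simp
        next
          assume "{x',y'} \<in> ET"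
          then have "Suc ` {x',y'} \<in> (`) Suc ` ET" by blast
          then show ?thesis using x' y' by simp
        qed
      qed
    qed
  qed
  have d4: "\<forall>x\<in>?VT. card (?B x) \<le> w" using Bw cS by auto
  have nz: "\<forall>e\<in>(`) Suc ` ET. 0 \<notin> e" by auto
  have deg0: "degree ?ET 0 = 1"
  proof -
    have "{u. {u,0} \<in> ?ET} = {1}" using nz by (auto simp: doubleton_eq_iff)
    then show ?thesis unfolding degree_def by simp
  qed
  have d5: "\<forall>x\<in>?VT. degree ?ET x \<le> D"
  proof
    fix x assume x: "x \<in> ?VT"
    show "degree ?ET x \<le> D"
    proof (cases "x = 0")
      case True then show ?thesis using deg0 dg by simp
    next
      case False
      then obtain x' where x': "x = Suc x'" "x' \<in> VT" using x by auto
      have dimg: "degree ((`) Suc ` ET) x = degree ET x'" using degree_img[of Suc ET x'] x' by simp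
      show ?thesis
      proof (cases "x' = 0")
        case True
        have "finite {u. {u, x} \<in> (`) Suc ` ET}" using ltr_nbrs_fin[OF L1] .
        then have "degree ?ET x \<le> degree ((`) Suc ` ET) x + 1" by (rule degree_insert_le)
        then show ?thesis using dimg True dg by simp
      next
        case False
        have "degree ?ET x = degree ((`) Suc ` ET) x"
          using degree_out[of "{{0,1}}" x "(`) Suc ` ET"] x' False by (simp add: Un_commute)
        then show ?thesis using dimg Bdeg x' by simp
      qed
    qed
  qed
  show ?thesis using Lt d1 d2 d3 d4 d5 deg0 unfolding gtp_def by blast
qed

definition f2 :: "nat \<Rightarrow> nat" where "f2 n = (if n = 0 then 0 else 2 * n - 1)"

lemma inj_f2: "inj f2"
  unfolding inj_def f2_def by auto

lemma inj_double: "inj (\<lambda>n::nat. 2 * n)"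
  unfolding inj_def by auto

lemma gtp_merge:
  assumes G1: "gtp (A \<union> X) (ind E (A \<union> X)) w D VT1 ET1 B1" and G2: "gtp (Bv \<union> X) (ind E (Bv \<union> X)) w D VT2 ET2 B2"
    and dAX: "A \<inter> X = {}" and dBX: "Bv \<inter> X = {}" and dAB: "A \<inter> Bv = {}" and V: "V = A \<union> X \<union> Bv"
    and noAB: "\<forall>u x. {u,x} \<in> E \<longrightarrow> u \<in> A \<longrightarrow> x \<notin> Bv"
    and X1: "X \<subseteq> B1 0" and X2: "X \<subseteq> B2 0" and cw: "card (B1 0 \<union> B2 0) \<le> w"
    and dg: "degree ET1 0 + degree ET2 0 \<le> D"
  shows "\<exists>VT ET B. gtp V E w D VT ET B \<and> B 0 = B1 0 \<union> B2 0 \<and> degree ET 0 \<le> degree ET1 0 + degree ET2 0"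
proof -
  define f1 :: "nat \<Rightarrow> nat" where "f1 n = 2 * n" for n
  have if1: "inj f1" using inj_double unfolding f1_def by simp
  have L1: "ltr 0 VT1 ET1" and Bd1: "\<forall>x\<in>VT1. \<forall>y\<in>VT1. x \<noteq> y \<longrightarrow> B1 x \<inter> B1 y = {}" and BU1: "(\<Union>x\<in>VT1. B1 x) = A \<union> X"
    and Be1: "\<forall>v u x y. {v,u} \<in> ind E (A \<union> X) \<longrightarrow> x \<in> VT1 \<longrightarrow> y \<in> VT1 \<longrightarrow> v \<in> B1 x \<longrightarrow> u \<in> B1 y \<longrightarrow> x = y \<or> {x,y} \<in> ET1"
    and Bw1: "\<forall>x\<in>VT1. card (B1 x) \<le> w" and Bdeg1: "\<forall>x\<in>VT1. degree ET1 x \<le> D"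
    using G1 unfolding gtp_def by auto
  have L2: "ltr 0 VT2 ET2" and Bd2: "\<forall>x\<in>VT2. \<forall>y\<in>VT2. x \<noteq> y \<longrightarrow> B2 x \<inter> B2 y = {}" and BU2: "(\<Union>x\<in>VT2. B2 x) = Bv \<union> X"
    and Be2: "\<forall>v u x y. {v,u} \<in> ind E (Bv \<union> X) \<longrightarrow> x \<in> VT2 \<longrightarrow> y \<in> VT2 \<longrightarrow> v \<in> B2 x \<longrightarrow> u \<in> B2 y \<longrightarrow> x = y \<or> {x,y} \<in> ET2"
    and Bw2: "\<forall>x\<in>VT2. card (B2 x) \<le> w" and Bdeg2: "\<forall>x\<in>VT2. degree ET2 x \<le> D"
    using G2 unfolding gtp_def by auto
  have r1: "0 \<in> VT1" using ltr_props[OF L1] by blast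
  have r2: "0 \<in> VT2" using ltr_props[OF L2] by blast
  define VT where "VT = f1 ` VT1 \<union> f2 ` VT2"
  define ET where "ET = (`) f1 ` ET1 \<union> (`) f2 ` ET2"
  define B where "B m = (if m = 0 then B1 0 \<union> B2 0 else if even m then B1 (m div 2) else B2 ((m + 1) div 2))" for m
  have M1: "ltr 0 (f1 ` VT1) ((`) f1 ` ET1)" using ltr_map[OF L1 if1] unfolding f1_def by simp
  have M2: "ltr 0 (f2 ` VT2) ((`) f2 ` ET2)" using ltr_map[OF L2 inj_f2] unfolding f2_def by simp
  have f1e: "even (f1 n)" for n unfolding f1_def by simp
  have f2o: "n \<noteq> 0 \<Longrightarrow> odd (f2 n)" for n unfolding f2_def by presburger
  have f10: "f1 n = 0 \<longleftrightarrow> n = 0" for n unfolding f1_def by simp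
  have f20: "f2 n = 0 \<longleftrightarrow> n = 0" for n unfolding f2_def by simp
  have f1z: "f1 0 = 0" and f2z: "f2 0 = 0" unfolding f1_def f2_def by simp_all
  have "f1 ` VT1 \<inter> f2 ` VT2 = {0}"
  proof
    show "f1 ` VT1 \<inter> f2 ` VT2 \<subseteq> {0}"
    proof
      fix m assume "m \<in> f1 ` VT1 \<inter> f2 ` VT2"
      then obtain a b where "m = f1 a" "m = f2 b" by blast
      then show "m \<in> {0}" using f1e f2o f20 by (metis singletonI)
    qed
    show "{0} \<subseteq> f1 ` VT1 \<inter> f2 ` VT2" using r1 r2 f10 f20 by (metis IntI empty_subsetI image_eqI insert_subset)
  qed
  then have LT: "ltr 0 VT ET" unfolding VT_def ET_def using ltr_glue[OF M2 M1] by blast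
  have Bf1: "n \<noteq> 0 \<Longrightarrow> B (f1 n) = B1 n" for n unfolding B_def f1_def by simp
  have Bf2: "n \<noteq> 0 \<Longrightarrow> B (f2 n) = B2 n" for n
  proof -
    assume n: "n \<noteq> 0"
    have "odd (2 * n - 1)" "2 * n - 1 \<noteq> 0" "(2 * n - 1 + 1) div 2 = n" using n by presburger+
    then show ?thesis unfolding B_def f2_def using n by simp
  qed
  have B0: "B 0 = B1 0 \<union> B2 0" unfolding B_def by simp
  have sub1: "B1 n \<subseteq> A" if "n \<in> VT1" "n \<noteq> 0" for n
  proof -
    have "B1 n \<subseteq> A \<union> X" using BU1 that by blast
    moreover have "B1 n \<inter> B1 0 = {}" using Bd1 that r1 by blast
    ultimately show ?thesis using X1 by blast
  qed
  have sub2: "B2 n \<subseteq> Bv" if "n \<in> VT2" "n \<noteq> 0" for n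
  proof -
    have "B2 n \<subseteq> Bv \<union> X" using BU2 that by blast
    moreover have "B2 n \<inter> B2 0 = {}" using Bd2 that r2 by blast
    ultimately show ?thesis using X2 by blast
  qed
  have b10: "B1 0 \<subseteq> A \<union> X" using BU1 r1 by blast
  have b20: "B2 0 \<subseteq> Bv \<union> X" using BU2 r2 by blast
  have cls: "m = 0 \<or> (\<exists>n\<in>VT1. n \<noteq> 0 \<and> m = f1 n) \<or> (\<exists>n\<in>VT2. n \<noteq> 0 \<and> m = f2 n)" if "m \<in> VT" for m
    using that unfolding VT_def by (metis Un_iff f10 f20 imageE)
  have F1: "\<exists>n\<in>VT1. v \<in> B1 n \<and> f1 n = m" if m: "m \<in> VT" and v: "v \<in> B m" "v \<in> A \<union> X" for m v
  proof -
    consider "m = 0" | n where "n \<in> VT1" "n \<noteq> 0" "m = f1 n" | n where "n \<in> VT2" "n \<noteq> 0" "m = f2 n"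
      using cls[OF m] by blast
    then show ?thesis
    proof cases
      case 1
      then have "v \<in> B1 0 \<union> B2 0" using v B0 by simp
      then have "v \<in> B1 0" using b20 v(2) X1 dAB dBX by blast
      then show ?thesis using r1 1 f1z by blast
    next
      case 2 then show ?thesis using v Bf1 by auto
    next
      case 3
      then have "v \<in> Bv" using v Bf2 sub2 by auto
      then show ?thesis using v(2) dAB dBX by blast
    qed
  qed
  have F2: "\<exists>n\<in>VT2. v \<in> B2 n \<and> f2 n = m" if m: "m \<in> VT" and v: "v \<in> B m" "v \<in> Bv \<union> X" for m v
  proof -
    consider "m = 0" | n where "n \<in> VT1" "n \<noteq> 0" "m = f1 n" | n where "n \<in> VT2" "n \<noteq> 0" "m = f2 n"
      using cls[OF m] by blast
    then show ?thesis
    proof cases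
      case 1
      then have "v \<in> B1 0 \<union> B2 0" using v B0 by simp
      then have "v \<in> B2 0" using b10 v(2) X2 dAB dAX by blast
      then show ?thesis using r2 1 f2z by blast
    next
      case 3 then show ?thesis using v Bf2 by auto
    next
      case 2
      then have "v \<in> A" using v Bf1 sub1 by auto
      then show ?thesis using v(2) dAB dAX by blast
    qed
  qed
  have BV: "B m \<subseteq> V" if mV: "m \<in> VT" for m
  proof -
    consider "m = 0" | n where "n \<in> VT1" "n \<noteq> 0" "m = f1 n" | n where "n \<in> VT2" "n \<noteq> 0" "m = f2 n"
      using cls[OF mV] by blast
    then show ?thesis
    proof cases
      case 1 then show ?thesis using B0 b10 b20 V by auto
    next
      case 2 then show ?thesis using Bf1 sub1 V by auto
    next
      case 3 then show ?thesis using Bf2 sub2 V by auto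
    qed
  qed
  have inB1: "v \<in> B (f1 n)" if "n \<in> VT1" "v \<in> B1 n" for n v
    using that Bf1 B0 f1z by (cases "n = 0") auto
  have inB2: "v \<in> B (f2 n)" if "n \<in> VT2" "v \<in> B2 n" for n v
    using that Bf2 B0 f2z by (cases "n = 0") auto
  have d1: "\<forall>x\<in>VT. \<forall>y\<in>VT. x \<noteq> y \<longrightarrow> B x \<inter> B y = {}"
  proof (intro ballI impI equals0I)
    fix x y v assume x: "x \<in> VT" and y: "y \<in> VT" and xy: "x \<noteq> y" and v: "v \<in> B x \<inter> B y"
    have "v \<in> V" using BV x v by blast
    then consider "v \<in> A \<union> X" | "v \<in> Bv \<union> X" using V by blast
    then show False
    proof cases
      case 1
      obtain n where n: "n \<in> VT1" "v \<in> B1 n" "f1 n = x" using F1[OF x _ 1] v by blast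
      obtain n' where n': "n' \<in> VT1" "v \<in> B1 n'" "f1 n' = y" using F1[OF y _ 1] v by blast
      have "n \<noteq> n'" using n n' xy by blast
      then show False using Bd1 n n' by blast
    next
      case 2
      obtain n where n: "n \<in> VT2" "v \<in> B2 n" "f2 n = x" using F2[OF x _ 2] v by blast
      obtain n' where n': "n' \<in> VT2" "v \<in> B2 n'" "f2 n' = y" using F2[OF y _ 2] v by blast
      have "n \<noteq> n'" using n n' xy by blast
      then show False using Bd2 n n' by blast
    qed
  qed
  have d2: "(\<Union>x\<in>VT. B x) = V"
  proof
    show "(\<Union>x\<in>VT. B x) \<subseteq> V" using BV by blast
    show "V \<subseteq> (\<Union>x\<in>VT. B x)"
    proof
      fix v assume "v \<in> V"
      then consider "v \<in> A \<union> X" | "v \<in> Bv \<union> X" using V by blast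
      then show "v \<in> (\<Union>x\<in>VT. B x)"
      proof cases
        case 1
        then obtain n where "n \<in> VT1" "v \<in> B1 n" using BU1 by blast
        then show ?thesis using inB1 unfolding VT_def by blast
      next
        case 2
        then obtain n where "n \<in> VT2" "v \<in> B2 n" using BU2 by blast
        then show ?thesis using inB2 unfolding VT_def by blast
      qed
    qed
  qed
  have d3: "\<forall>v u x y. {v,u} \<in> E \<longrightarrow> x \<in> VT \<longrightarrow> y \<in> VT \<longrightarrow> v \<in> B x \<longrightarrow> u \<in> B y \<longrightarrow> x = y \<or> {x,y} \<in> ET"
  proof (intro allI impI)
    fix v u x y assume e: "{v,u} \<in> E" and x: "x \<in> VT" and y: "y \<in> VT" and v: "v \<in> B x" and u: "u \<in> B y"
    have vV: "v \<in> V" and uV: "u \<in> V" using BV x y v u by auto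
    have e': "{u,v} \<in> E" using e by (simp add: insert_commute)
    have c: "(v \<in> A \<union> X \<and> u \<in> A \<union> X) \<or> (v \<in> Bv \<union> X \<and> u \<in> Bv \<union> X)"
      using noAB e e' vV uV V by blast
    then show "x = y \<or> {x,y} \<in> ET"
    proof
      assume h: "v \<in> A \<union> X \<and> u \<in> A \<union> X"
      obtain n where n: "n \<in> VT1" "v \<in> B1 n" "f1 n = x" using F1[OF x v] h by blast
      obtain n' where n': "n' \<in> VT1" "u \<in> B1 n'" "f1 n' = y" using F1[OF y u] h by blast
      have "{v,u} \<in> ind E (A \<union> X)" using e h unfolding ind_def by blast
      then have "n = n' \<or> {n,n'} \<in> ET1" using Be1 n n' by blast
      then show ?thesis
      proof
        assume "n = n'" then show ?thesis using n n' by simp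
      next
        assume "{n,n'} \<in> ET1"
        then have "f1 ` {n,n'} \<in> ET" unfolding ET_def by blast
        then show ?thesis using n n' by simp
      qed
    next
      assume h: "v \<in> Bv \<union> X \<and> u \<in> Bv \<union> X"
      obtain n where n: "n \<in> VT2" "v \<in> B2 n" "f2 n = x" using F2[OF x v] h by blast
      obtain n' where n': "n' \<in> VT2" "u \<in> B2 n'" "f2 n' = y" using F2[OF y u] h by blast
      have "{v,u} \<in> ind E (Bv \<union> X)" using e h unfolding ind_def by blast
      then have "n = n' \<or> {n,n'} \<in> ET2" using Be2 n n' by blast
      then show ?thesis
      proof
        assume "n = n'" then show ?thesis using n n' by simp
      next
        assume "{n,n'} \<in> ET2"
        then have "f2 ` {n,n'} \<in> ET" unfolding ET_def by blast
        then show ?thesis using n n' by simp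
      qed
    qed
  qed
  have d4: "\<forall>x\<in>VT. card (B x) \<le> w"
  proof
    fix m assume m: "m \<in> VT"
    consider "m = 0" | n where "n \<in> VT1" "n \<noteq> 0" "m = f1 n" | n where "n \<in> VT2" "n \<noteq> 0" "m = f2 n"
      using cls[OF m] by blast
    then show "card (B m) \<le> w"
    proof cases
      case 1 then show ?thesis using B0 cw by simp
    next
      case 2 then show ?thesis using Bf1 Bw1 by simp
    next
      case 3 then show ?thesis using Bf2 Bw2 by simp
    qed
  qed
  have EV1: "\<forall>e\<in>ET1. e \<subseteq> VT1" using ltr_tree[OF L1] by blast
  have EV2: "\<forall>e\<in>ET2. e \<subseteq> VT2" using ltr_tree[OF L2] by blast
  have dimg1: "degree ((`) f1 ` ET1) (f1 n) = degree ET1 n" for n using degree_img[OF if1] .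
  have dimg2: "degree ((`) f2 ` ET2) (f2 n) = degree ET2 n" for n using degree_img[OF inj_f2] .
  have deg0: "degree ET 0 \<le> degree ET1 0 + degree ET2 0"
  proof -
    have "degree ET 0 \<le> degree ((`) f1 ` ET1) 0 + degree ((`) f2 ` ET2) 0"
      unfolding ET_def using ltr_nbrs_fin[OF M1] ltr_nbrs_fin[OF M2] by (rule degree_Un_le)
    moreover have "degree ((`) f1 ` ET1) 0 = degree ET1 0" using dimg1[of 0] f1z by simp
    moreover have "degree ((`) f2 ` ET2) 0 = degree ET2 0" using dimg2[of 0] f2z by simp
    ultimately show ?thesis by simp
  qed
  have d5: "\<forall>x\<in>VT. degree ET x \<le> D"
  proof
    fix m assume m: "m \<in> VT"
    consider "m = 0" | n where "n \<in> VT1" "n \<noteq> 0" "m = f1 n" | n where "n \<in> VT2" "n \<noteq> 0" "m = f2 n"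
      using cls[OF m] by blast
    then show "degree ET m \<le> D"
    proof cases
      case 1 then show ?thesis using deg0 dg by simp
    next
      case 2
      have "\<forall>e\<in>(`) f2 ` ET2. m \<notin> e"
      proof (intro ballI notI)
        fix e assume "e \<in> (`) f2 ` ET2" "m \<in> e"
        then obtain n' where "m = f2 n'" by blast
        then show False using 2 f1e f2o f20 f10 by metis
      qed
      then have "degree ET m = degree ((`) f1 ` ET1) m" unfolding ET_def by (rule degree_out)
      then show ?thesis using 2 dimg1 Bdeg1 by simp
    next
      case 3
      have "\<forall>e\<in>(`) f1 ` ET1. m \<notin> e"
      proof (intro ballI notI)
        fix e assume "e \<in> (`) f1 ` ET1" "m \<in> e"
        then obtain n' where "m = f1 n'" by blast
        then show False using 3 f1e f2o by metis
      qed
      then have "degree ET m = degree ((`) f2 ` ET2) m" unfolding ET_def by (subst Un_commute) (rule degree_out)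
      then show ?thesis using 3 dimg2 Bdeg2 by simp
    qed
  qed
  have "gtp V E w D VT ET B" unfolding gtp_def using LT d1 d2 d3 d4 d5 by blast
  then show ?thesis using B0 deg0 by blast
qed

lemma ar1: "2*k*a \<le> 12*k*d \<Longrightarrow> (k::nat) \<ge> 1 \<Longrightarrow> a \<le> 6*d"
proof -
  assume h: "2*k*a \<le> 12*k*d" "k \<ge> 1"
  have "(2*k)*a \<le> (2*k)*(6*d)" using h(1) by (simp add: algebra_simps)
  then show ?thesis using h(2) by simp
qed

lemma ar2: "2*c \<le> 3*s \<Longrightarrow> s \<le> 12*k*d \<Longrightarrow> (c::nat) \<le> 18*k*d"
  by simp

lemma nbr_count:
  assumes g: "graph V E" and md: "max_degree_le V E d" and SV: "S \<subseteq> V"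
  shows "card {x\<in>V - S. \<exists>u\<in>S. {u,x} \<in> E} \<le> d * card S"
proof -
  have finV: "finite V" using g unfolding graph_def by blast
  have finS: "finite S" using SV finV finite_subset by blast
  have sub: "{x\<in>V - S. \<exists>u\<in>S. {u,x} \<in> E} \<subseteq> (\<Union>u\<in>S. {x. {x,u} \<in> E})" by (auto simp: insert_commute)
  have fin: "finite (\<Union>u\<in>S. {x. {x,u} \<in> E})" using finS nbrs_fin[OF g] by blast
  have "card {x\<in>V - S. \<exists>u\<in>S. {u,x} \<in> E} \<le> card (\<Union>u\<in>S. {x. {x,u} \<in> E})" using card_mono[OF fin sub] .
  also have "\<dots> \<le> (\<Sum>u\<in>S. card {x. {x,u} \<in> E})" using card_UN_le[OF finS] .
  also have "\<dots> \<le> (\<Sum>u\<in>S. d)"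
  proof (rule sum_mono)
    fix u assume "u \<in> S"
    then show "card {x. {x,u} \<in> E} \<le> d" using md SV unfolding max_degree_le_def degree_def by blast
  qed
  also have "\<dots> = d * card S" by simp
  finally show ?thesis .
qed

lemma main:
  fixes V :: "'a set" and E :: "'a set set" and S :: "'a set" and k d :: nat
  assumes k1: "k \<ge> 1" and d1: "d \<ge> 1"
  shows "graph V E \<Longrightarrow> treewidth_le V E (k - 1) \<Longrightarrow> max_degree_le V E d \<Longrightarrow> S \<subseteq> V \<Longrightarrow> 4*k \<le> card S \<Longrightarrow> card S \<le> 12*k*d \<Longrightarrow>
    \<exists>VT ET B. gtp V E (18*k*d) (6*d) VT ET B \<and> S \<subseteq> B 0 \<and> 2 * card (B 0) + 4*k \<le> 3 * card S \<and> 2*k*(degree ET 0 + 1) \<le> card S"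
proof (induction "card V" arbitrary: V E S rule: less_induct)
  case less
  note IH = less.hyps
  have g: "graph V E" and tw: "treewidth_le V E (k - 1)" and md: "max_degree_le V E d" and SV: "S \<subseteq> V"
    and c1: "4*k \<le> card S" and c2: "card S \<le> 12*k*d" using less.prems by auto
  have finV: "finite V" using g unfolding graph_def by blast
  have finS: "finite S" using SV finV finite_subset by blast
  define w where "w = 18*k*d"
  define D where "D = 6*d"
  have kd: "k \<le> k*d" using d1 by simp
  have e18: "18*k*d = 18*(k*d)" and e12: "12*k*d = 12*(k*d)" by simp_all
  have k18: "4*k \<le> 18*k*d" "12*k \<le> 18*k*d" "4*k \<le> 12*k*d" "12*k \<le> 12*k*d" using kd unfolding e18 e12 by linarith+
  show ?case
  proof (cases "card S \<le> 12*k")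
    case small: True
    show ?thesis
    proof (cases "V = S")
      case True
      have "gtp V E w D {0} {} (\<lambda>_. V)" using c2 True unfolding w_def by (intro gtp_single) simp
      moreover have "degree ({}::nat set set) 0 = 0" unfolding degree_def by simp
      ultimately show ?thesis using True c1 unfolding w_def D_def by (intro exI[of _ "{0::nat}"] exI[of _ "{}::nat set set"] exI[of _ "\<lambda>_::nat. V"]) auto
    next
      case False
      define V' where "V' = V - S"
      define N where "N = {x\<in>V - S. \<exists>u\<in>S. {u,x} \<in> E}"
      have cN: "card N \<le> d * card S" unfolding N_def using nbr_count[OF g md SV] .
      have NV: "N \<subseteq> V'" unfolding N_def V'_def by blast
      have finV': "finite V'" using finV unfolding V'_def by blast
      have sub: "\<exists>VT ET B. gtp V' (ind E V') w D VT ET B \<and> N \<subseteq> B 0 \<and> degree ET 0 + 1 \<le> D"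
      proof (cases "card V' < 4*k")
        case True
        have "gtp V' (ind E V') w D {0} {} (\<lambda>_. V')" unfolding w_def by (rule gtp_single) (use True k18(1) in linarith)
        moreover have "degree ({}::nat set set) 0 = 0" unfolding degree_def by simp
        ultimately show ?thesis using NV d1 unfolding D_def
          by (intro exI[of _ "{0::nat}"] exI[of _ "{}::nat set set"] exI[of _ "\<lambda>_::nat. V'"]) auto
      next
        case False
        obtain S' where S': "N \<subseteq> S'" "S' \<subseteq> V'" "4*k \<le> card S'" "card S' \<le> 12*k*d"
        proof (cases "4*k \<le> card N")
          case True
          have "card N \<le> 12*k*d"
          proof -
            have "d * card S \<le> d * (12*k)" using small by (rule mult_le_mono2)
            moreover have "d * (12*k) = 12*k*d" by simp
            ultimately show ?thesis using cN by linarith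
          qed
          show ?thesis by (rule that[of N]) (use True NV \<open>card N \<le> 12*k*d\<close> in auto)
        next
          case False
          have finN: "finite N" using finite_subset[OF NV finV'] .
          have "card V' \<le> card (V' - N) + card N"
          proof -
            have "card V' \<le> card ((V' - N) \<union> N)" using finV' finN by (intro card_mono) auto
            also have "\<dots> \<le> card (V' - N) + card N" by (rule card_Un_le)
            finally show ?thesis .
          qed
          then have "4*k - card N \<le> card (V' - N)" using \<open>\<not> card V' < 4*k\<close> by linarith
          then obtain Y where Y: "Y \<subseteq> V' - N" "card Y = 4*k - card N" by (rule obtain_subset_with_card_n)
          have YV: "Y \<subseteq> V'" using Y(1) by blast
          have finY: "finite Y" using finite_subset[OF YV finV'] .
          have NY: "N \<inter> Y = {}" using Y(1) by blast
          have "card (N \<union> Y) = card N + card Y" using card_Un_disjoint[OF finN finY NY] .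
          then have cNY: "card (N \<union> Y) = 4*k" using Y(2) False by linarith
          have "N \<union> Y \<subseteq> V'" using YV NV by blast
          then show ?thesis by (rule that[of "N \<union> Y", OF Un_upper1]) (use cNY k18(3) in linarith)+
        qed
        have lt: "card V' < card V"
        proof -
          have "S \<noteq> {}" using c1 k1 by auto
          then have "V' \<subset> V" unfolding V'_def using SV by blast
          then show ?thesis using finV psubset_card_mono by blast
        qed
        have V'V: "V' \<subseteq> V" unfolding V'_def by blast
        obtain VT ET B where R: "gtp V' (ind E V') (18*k*d) (6*d) VT ET B" "S' \<subseteq> B 0"
          "2*k*(degree ET 0 + 1) \<le> card S'"
          using IH[OF lt graph_ind[OF g V'V] tw_ind[OF g tw V'V] deg_ind[OF g md V'V] S'(2) S'(3) S'(4)] by auto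
        have "2*k*(degree ET 0 + 1) \<le> 12*k*d" using R(3) S'(4) by linarith
        then have "degree ET 0 + 1 \<le> 6*d" using ar1 k1 by blast
        moreover have "N \<subseteq> B 0" using R(2) S'(1) by blast
        ultimately show ?thesis using R(1) unfolding w_def D_def by (intro exI[of _ VT] exI[of _ ET] exI[of _ B]) blast
      qed
      then obtain VT ET B where R: "gtp (V - S) (ind E (V - S)) w D VT ET B" "N \<subseteq> B 0" "degree ET 0 + 1 \<le> D"
        unfolding V'_def by blast
      have NN: "\<forall>u x. {u,x} \<in> E \<longrightarrow> u \<in> S \<longrightarrow> x \<in> V - S \<longrightarrow> x \<in> B 0" using R(2) unfolding N_def by blast
      have cSw: "card S \<le> w" using c2 unfolding w_def by simp
      have X: "gtp V E w D (insert 0 (Suc ` VT)) (insert {0,1} ((`) Suc ` ET)) (\<lambda>n. if n = 0 then S else B (n - 1))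
         \<and> degree (insert {0,1} ((`) Suc ` ET)) 0 = 1"
        using gtp_extend[OF R(1) SV cSw NN R(3)] .
      show ?thesis
        apply (rule exI[of _ "insert 0 (Suc ` VT)"])
        apply (rule exI[of _ "insert {0,1} ((`) Suc ` ET)"])
        apply (rule exI[of _ "\<lambda>n. if n = 0 then S else B (n - 1)"])
        using X c1 unfolding w_def D_def by simp
    qed
  next
    case large: False
    have big: "10*k \<le> card S" using large by linarith
    obtain VT0 :: "nat set" and ET0 W where td: "tree_decomposition V E VT0 ET0 W" and bw: "\<forall>x\<in>VT0. card (W x) \<le> k - 1 + 1"
      using tw unfolding treewidth_le_def by blast
    obtain x and I :: "nat set" and P where x: "x \<in> VT0" and PP: "finite I" "\<forall>i\<in>I. P i \<subseteq> V - W x"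
      "\<forall>i\<in>I. \<forall>j\<in>I. i \<noteq> j \<longrightarrow> P i \<inter> P j = {}" "(\<Union>i\<in>I. P i) = V - W x"
      "\<forall>u w i j. {u,w} \<in> E \<longrightarrow> i \<in> I \<longrightarrow> j \<in> I \<longrightarrow> u \<in> P i \<longrightarrow> w \<in> P j \<longrightarrow> i = j"
      "\<forall>i\<in>I. 2 * card (S \<inter> P i) \<le> card S"
      using td_sep[OF td finV SV] by (elim bexE exE conjE) (rule that; assumption)
    have WxV: "W x \<subseteq> V" using td x unfolding tree_decomposition_def by blast
    have cWx: "card (W x) \<le> k" using bw x k1 by simp
    obtain X A Bv where XAB: "X \<subseteq> V" "card X = k" "A \<inter> X = {}" "Bv \<inter> X = {}" "A \<inter> Bv = {}" "A \<union> X \<union> Bv = V"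
      "\<forall>u w. {u,w} \<in> E \<longrightarrow> u \<in> A \<longrightarrow> w \<notin> Bv" "3*k \<le> card (S \<inter> A)" "3*k \<le> card (S \<inter> Bv)"
      using grouping[OF finV WxV cWx k1 PP(1) PP(2) PP(3) PP(4) PP(5) PP(6) SV big] by (elim exE conjE) (rule that; assumption)
    have finA: "finite A" and finX: "finite X" and finB: "finite Bv" using XAB(6) finV by (metis finite_Un)+
    have finSA: "finite (S \<inter> A)" and finSB: "finite (S \<inter> Bv)" using finS by auto
    have sAB: "card (S \<inter> A) + card (S \<inter> Bv) \<le> card S"
    proof -
      have "card (S \<inter> A) + card (S \<inter> Bv) = card ((S \<inter> A) \<union> (S \<inter> Bv))"
        using XAB(5) by (intro card_Un_disjoint[symmetric] finSA finSB) blast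
      also have "\<dots> \<le> card S" using finS by (intro card_mono) auto
      finally show ?thesis .
    qed
    define V1 where "V1 = A \<union> X"
    define V2 where "V2 = Bv \<union> X"
    define S1 where "S1 = (S \<inter> A) \<union> X"
    define S2 where "S2 = (S \<inter> Bv) \<union> X"
    have cS1: "card S1 = card (S \<inter> A) + k" unfolding S1_def using XAB(3) XAB(2)
      by (subst card_Un_disjoint[OF finSA finX]) blast+
    have cS2: "card S2 = card (S \<inter> Bv) + k" unfolding S2_def using XAB(4) XAB(2)
      by (subst card_Un_disjoint[OF finSB finX]) blast+
    have V1V: "V1 \<subseteq> V" and V2V: "V2 \<subseteq> V" using XAB(6) unfolding V1_def V2_def by blast+
    have S1V: "S1 \<subseteq> V1" and S2V: "S2 \<subseteq> V2" unfolding S1_def V1_def S2_def V2_def by blast+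
    have lt1: "card V1 < card V"
    proof -
      have "S \<inter> Bv \<noteq> {}" using XAB(9) k1 by auto
      then obtain b where "b \<in> Bv" "b \<in> V" using SV by blast
      then have "b \<notin> V1" using XAB(4) XAB(5) unfolding V1_def by blast
      then have "V1 \<subset> V" using V1V \<open>b \<in> V\<close> by blast
      then show ?thesis using finV psubset_card_mono by blast
    qed
    have lt2: "card V2 < card V"
    proof -
      have "S \<inter> A \<noteq> {}" using XAB(8) k1 by auto
      then obtain b where "b \<in> A" "b \<in> V" using SV by blast
      then have "b \<notin> V2" using XAB(3) XAB(5) unfolding V2_def by blast
      then have "V2 \<subset> V" using V2V \<open>b \<in> V\<close> by blast
      then show ?thesis using finV psubset_card_mono by blast
    qed
    have a1: "4*k \<le> card S1" "card S1 \<le> 12*k*d" using cS1 XAB(8) XAB(9) sAB c2 by linarith+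
    have a2: "4*k \<le> card S2" "card S2 \<le> 12*k*d" using cS2 XAB(8) XAB(9) sAB c2 by linarith+
    obtain VT1 ET1 B1 where R1: "gtp V1 (ind E V1) (18*k*d) (6*d) VT1 ET1 B1" "S1 \<subseteq> B1 0"
      "2 * card (B1 0) + 4*k \<le> 3 * card S1" "2*k*(degree ET1 0 + 1) \<le> card S1"
      using IH[OF lt1 graph_ind[OF g V1V] tw_ind[OF g tw V1V] deg_ind[OF g md V1V] S1V a1] by auto
    obtain VT2 ET2 B2 where R2: "gtp V2 (ind E V2) (18*k*d) (6*d) VT2 ET2 B2" "S2 \<subseteq> B2 0"
      "2 * card (B2 0) + 4*k \<le> 3 * card S2" "2*k*(degree ET2 0 + 1) \<le> card S2"
      using IH[OF lt2 graph_ind[OF g V2V] tw_ind[OF g tw V2V] deg_ind[OF g md V2V] S2V a2] by auto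
    have X1: "X \<subseteq> B1 0" and X2: "X \<subseteq> B2 0" using R1(2) R2(2) unfolding S1_def S2_def by blast+
    have B10: "B1 0 \<subseteq> V1"
    proof -
      have L: "ltr 0 VT1 ET1" and U: "(\<Union>x\<in>VT1. B1 x) = V1" using R1(1) unfolding gtp_def by blast+
      have "0 \<in> VT1" using ltr_props[OF L] by blast
      then show ?thesis using U by blast
    qed
    have B20: "B2 0 \<subseteq> V2"
    proof -
      have L: "ltr 0 VT2 ET2" and U: "(\<Union>x\<in>VT2. B2 x) = V2" using R2(1) unfolding gtp_def by blast+
      have "0 \<in> VT2" using ltr_props[OF L] by blast
      then show ?thesis using U by blast
    qed
    have fV1: "finite V1" using finite_subset[OF V1V finV] .
    have fV2: "finite V2" using finite_subset[OF V2V finV] .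
    have fB1: "finite (B1 0)" using finite_subset[OF B10 fV1] .
    have fB2: "finite (B2 0)" using finite_subset[OF B20 fV2] .
    have cUI: "card (B1 0) + card (B2 0) = card (B1 0 \<union> B2 0) + card (B1 0 \<inter> B2 0)"
      using card_Un_Int[OF fB1 fB2] .
    have "card X \<le> card (B1 0 \<inter> B2 0)" using X1 X2 fB1 by (intro card_mono) auto
    then have cI: "k \<le> card (B1 0 \<inter> B2 0)" using XAB(2) by simp
    have cw0: "2 * card (B1 0 \<union> B2 0) + 4*k \<le> 3 * card S"
      using cUI cI R1(3) R2(3) cS1 cS2 sAB by linarith
    have cw: "card (B1 0 \<union> B2 0) \<le> 18*k*d" using cw0 c2 by linarith
    define p where "p = degree ET1 0"
    define q where "q = degree ET2 0"
    have ep: "2*k*(p+1) = 2*(k*p) + 2*k" and eq: "2*k*(q+1) = 2*(k*q) + 2*k" by (simp_all add: algebra_simps)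
    have pq: "2*(k*p) + 2*(k*q) + 2*k \<le> card S" using R1(4) R2(4) cS1 cS2 sAB ep eq unfolding p_def q_def by linarith
    have "2*k*(p+q) = 2*(k*p) + 2*(k*q)" by (simp add: algebra_simps)
    then have "2*k*(p+q) \<le> 12*k*d" using pq c2 by linarith
    then have dg: "degree ET1 0 + degree ET2 0 \<le> 6*d" using ar1 k1 unfolding p_def q_def by blast
    have noAB: "\<forall>u x. {u,x} \<in> E \<longrightarrow> u \<in> A \<longrightarrow> x \<notin> Bv" using XAB(7) by blast
    obtain VT ET B where M: "gtp V E (18*k*d) (6*d) VT ET B" "B 0 = B1 0 \<union> B2 0" "degree ET 0 \<le> degree ET1 0 + degree ET2 0"
      using gtp_merge[OF R1(1)[unfolded V1_def] R2(1)[unfolded V2_def] XAB(3) XAB(4) XAB(5) XAB(6)[symmetric] noAB X1 X2 cw dg] by blast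
    have SB: "S \<subseteq> B 0"
    proof
      fix v assume "v \<in> S"
      then have "v \<in> S1 \<or> v \<in> S2" using SV XAB(6) unfolding S1_def S2_def by blast
      then show "v \<in> B 0" using R1(2) R2(2) M(2) by blast
    qed
    define t where "t = degree ET 0"
    have "k*t \<le> k*(p+q)" using M(3) unfolding t_def p_def q_def by (intro mult_le_mono2)
    then have "k*t \<le> k*p + k*q" by (simp add: algebra_simps)
    moreover have "2*k*(t+1) = 2*(k*t) + 2*k" by (simp add: algebra_simps)
    ultimately have "2*k*(degree ET 0 + 1) \<le> card S" using pq unfolding t_def by linarith
    then show ?thesis using M(1) SB cw0 M(2) by (intro exI[of _ VT] exI[of _ ET] exI[of _ B]) simp
  qed
qed

lemma gtp_conv: "gtp V E w D VT ET B \<Longrightarrow> T_partition V E VT ET B \<and> width_le VT B w \<and> max_degree_le VT ET D"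
proof -
  assume G: "gtp V E w D VT ET B"
  then have L: "ltr 0 VT ET" unfolding gtp_def by blast
  have "tree VT ET" using ltr_tree[OF L] by blast
  then show ?thesis using G unfolding gtp_def T_partition_def width_le_def max_degree_le_def by blast
qed

theorem lemma3:
  fixes V :: "'a set" and E :: "'a set set" and k d :: nat
  assumes "k \<ge> 1" and "d \<ge> 1"
    and "graph V E"
    and "treewidth_le V E (k - 1)"
    and "max_degree_le V E d"
  shows "(\<exists>(VT::nat set) ET B. T_partition V E VT ET B \<and> width_le VT B (18 * k * d)
            \<and> max_degree_le VT ET (6 * d))
       \<and> (\<forall>S. S \<subseteq> V \<longrightarrow> 4 * k \<le> card S \<longrightarrow> card S \<le> 12 * k * d \<longrightarrow>
            (\<exists>(VT::nat set) ET B. T_partition V E VT ET B \<and> width_le VT B (18 * k * d)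
               \<and> max_degree_le VT ET (6 * d)
               \<and> (\<exists>z\<in>VT. S \<subseteq> B z
                    \<and> real (card (B z)) \<le> 3 / 2 * real (card S) - 2 * real k
                    \<and> real (degree ET z) \<le> real (card S) / (2 * real k) - 1)))"
proof
  have k1: "k \<ge> 1" and d1: "d \<ge> 1" and g: "graph V E" and tw: "treewidth_le V E (k - 1)" and md: "max_degree_le V E d"
    using assms by auto
  have kd: "k \<le> k*d" using d1 by simp
  have e18: "18*k*d = 18*(k*d)" and e12: "12*k*d = 12*(k*d)" by simp_all
  have k18: "4*k \<le> 18*k*d" "4*k \<le> 12*k*d" using kd unfolding e18 e12 by linarith+
  have finV: "finite V" using g unfolding graph_def by blast
  show "\<exists>(VT::nat set) ET B. T_partition V E VT ET B \<and> width_le VT B (18 * k * d) \<and> max_degree_le VT ET (6 * d)"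
  proof (cases "4*k \<le> card V")
    case True
    then obtain S where S: "S \<subseteq> V" "card S = 4*k" by (rule obtain_subset_with_card_n)
    have c1: "4*k \<le> card S" and c2: "card S \<le> 12*k*d" using S(2) k18(2) by simp_all
    obtain VT ET B where G: "gtp V E (18*k*d) (6*d) VT ET B"
      using main[OF k1 d1 g tw md S(1) c1 c2] by (elim exE conjE)
    show ?thesis using gtp_conv[OF G] by (intro exI[of _ VT] exI[of _ ET] exI[of _ B])
  next
    case False
    have G: "gtp V E (18*k*d) (6*d) {0} {} (\<lambda>_. V)" by (rule gtp_single) (use False k18(1) in linarith)
    show ?thesis using gtp_conv[OF G] by (intro exI[of _ "{0::nat}"] exI[of _ "{}::nat set set"] exI[of _ "\<lambda>_::nat. V"])
  qed
  show "\<forall>S. S \<subseteq> V \<longrightarrow> 4 * k \<le> card S \<longrightarrow> card S \<le> 12 * k * d \<longrightarrow>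
            (\<exists>(VT::nat set) ET B. T_partition V E VT ET B \<and> width_le VT B (18 * k * d)
               \<and> max_degree_le VT ET (6 * d)
               \<and> (\<exists>z\<in>VT. S \<subseteq> B z
                    \<and> real (card (B z)) \<le> 3 / 2 * real (card S) - 2 * real k
                    \<and> real (degree ET z) \<le> real (card S) / (2 * real k) - 1))"
  proof (intro allI impI)
    fix S assume S: "S \<subseteq> V" "4 * k \<le> card S" "card S \<le> 12 * k * d"
    obtain VT ET B where R: "gtp V E (18*k*d) (6*d) VT ET B" "S \<subseteq> B 0" "2 * card (B 0) + 4*k \<le> 3 * card S"
      "2*k*(degree ET 0 + 1) \<le> card S"
      using main[OF k1 d1 g tw md S(1) S(2) S(3)] by (elim exE conjE) (rule that; assumption)
    have L: "ltr 0 VT ET" using R(1) unfolding gtp_def by (elim conjE)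
    have z: "0 \<in> VT" using ltr_props[OF L] by (elim conjE)
    have r1: "real (card (B 0)) \<le> 3 / 2 * real (card S) - 2 * real k"
    proof -
      have "real (2 * card (B 0) + 4*k) \<le> real (3 * card S)" using R(3) by (simp only: of_nat_le_iff)
      then show ?thesis by simp
    qed
    have r2: "real (degree ET 0) \<le> real (card S) / (2 * real k) - 1"
    proof -
      have "real (2*k*(degree ET 0 + 1)) \<le> real (card S)" using R(4) by (simp only: of_nat_le_iff)
      then have h: "(real (degree ET 0) + 1) * (2 * real k) \<le> real (card S)" by (simp add: algebra_simps)
      have kp: "0 < 2 * real k" using k1 by simp
      have "real (degree ET 0) + 1 \<le> real (card S) / (2 * real k)" using h kp by (simp add: pos_le_divide_eq)
      then show ?thesis by simp
    qed
    show "\<exists>(VT::nat set) ET B. T_partition V E VT ET B \<and> width_le VT B (18 * k * d)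
               \<and> max_degree_le VT ET (6 * d)
               \<and> (\<exists>z\<in>VT. S \<subseteq> B z
                    \<and> real (card (B z)) \<le> 3 / 2 * real (card S) - 2 * real k
                    \<and> real (degree ET z) \<le> real (card S) / (2 * real k) - 1)"
      apply (rule exI[of _ VT])
      apply (rule exI[of _ ET])
      apply (rule exI[of _ B])
      apply (intro conjI)
         apply (rule gtp_conv[OF R(1), THEN conjunct1])
        apply (rule gtp_conv[OF R(1), THEN conjunct2, THEN conjunct1])
       apply (rule gtp_conv[OF R(1), THEN conjunct2, THEN conjunct2])
      apply (rule bexI[of _ 0])
       apply (intro conjI)
         apply (rule R(2))
        apply (rule r1)
       apply (rule r2)
      apply (rule z)
      done
  qed
qed

end
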